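(* Let $(\rho,\rho_t)$ be a solution on a time interval of the system $\frac{d\rho}{dt}=\rho_t$, $\frac{d\rho_t}{dt}=f(\rho,\rho_t)$ with $\int_0^1\rho(t,x)^2dx=1$ for all $t$ in the interval, and set $G(t,x)=G(\rho(t),\rho_t(t))(x)$. Then $$\frac{d}{dt}\int_0^1\big(\rho^2G^2+4\rho_t^2\big)\,dx=0.$$
   Context: $S^1=\mathbb{R}/\mathbb{Z}$; functions on $S^1$ are $1$-periodic functions on $[0,1]$. Fix $\mu\in\mathbb{R}$. For $\rho,\sigma\in L^2(S^1)$ define $$G(\rho,\sigma)(x)=\int_0^x 2\rho\sigma\,dy+\mu-\int_0^1\Big(\int_0^y 2\rho\sigma\,dz\Big)\rho(y)^2\,dy,$$ $$F(\rho,\sigma)(x)=\int_0^1\frac{\cosh\big(\big|\int_y^x\rho(z)^2dz\big|-\tfrac12\big)}{2\sinh(1/2)}\big(\rho(y)^2G(y)^2+2\sigma(y)^2\big)\,dy,\qquad f(\rho,\sigma)=\tfrac12\rho\,(G^2-F),$$ with $G=G(\rho,\sigma)$. In the system, $\rho_t$ denotes the second unknown. *)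

theory Defs
  imports "HOL-Analysis.Analysis"
begin

text \<open>Functions on S^1 = R/Z are represented by real functions; only their values on
  [0,1] enter. All integrals are Lebesgue integrals over subintervals of [0,1].\<close>

definition sqint01 :: "(real \<Rightarrow> real) \<Rightarrow> bool" where
  "sqint01 g \<longleftrightarrow> set_borel_measurable lborel {0..1} g \<and>
     set_integrable lborel {0..1} (\<lambda>x. (g x)^2)"

definition l2dist01 :: "(real \<Rightarrow> real) \<Rightarrow> (real \<Rightarrow> real) \<Rightarrow> real" where
  "l2dist01 g h = sqrt (LINT x:{0..1}|lborel. (g x - h x)^2)"

definition Gop :: "real \<Rightarrow> (real \<Rightarrow> real) \<Rightarrow> (real \<Rightarrow> real) \<Rightarrow> real \<Rightarrow> real" where
  "Gop \<mu> \<rho> \<sigma> x =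
     (LINT y:{0..x}|lborel. 2 * \<rho> y * \<sigma> y) + \<mu>
     - (LINT y:{0..1}|lborel. (LINT z:{0..y}|lborel. 2 * \<rho> z * \<sigma> z) * (\<rho> y)^2)"

text \<open>The signed integral from y to x of rho^2 has absolute value equal to the integral of
  rho^2 over the interval between x and y.\<close>
definition Fop :: "real \<Rightarrow> (real \<Rightarrow> real) \<Rightarrow> (real \<Rightarrow> real) \<Rightarrow> real \<Rightarrow> real" where
  "Fop \<mu> \<rho> \<sigma> x =
     (LINT y:{0..1}|lborel.
        cosh (\<bar>LINT z:{min x y..max x y}|lborel. (\<rho> z)^2\<bar> - 1/2) / (2 * sinh (1/2))
        * ((\<rho> y)^2 * (Gop \<mu> \<rho> \<sigma> y)^2 + 2 * (\<sigma> y)^2))"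

definition fop :: "real \<Rightarrow> (real \<Rightarrow> real) \<Rightarrow> (real \<Rightarrow> real) \<Rightarrow> real \<Rightarrow> real" where
  "fop \<mu> \<rho> \<sigma> x = 1/2 * \<rho> x * ((Gop \<mu> \<rho> \<sigma> x)^2 - Fop \<mu> \<rho> \<sigma> x)"

definition has_L2_derivative ::
  "(real \<Rightarrow> real \<Rightarrow> real) \<Rightarrow> (real \<Rightarrow> real) \<Rightarrow> real \<Rightarrow> real set \<Rightarrow> bool" where
  "has_L2_derivative u v t I \<longleftrightarrow>
     ((\<lambda>s. l2dist01 (\<lambda>x. (u s x - u t x) / (s - t)) v) \<longlongrightarrow> 0) (at t within I)"

end

theory Submission
  imports Defs
begin

definition M01 :: "real measure" where "M01 = restrict_space lborel {0..1}"

lemma space_M01[simp]: "space M01 = {0..1}"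
  by (simp add: M01_def)

lemma sets_M01_le: "A \<in> sets borel \<Longrightarrow> A \<inter> {0..1} \<in> sets M01"
  unfolding M01_def by (auto simp: sets_restrict_space)

lemma M01_finite: "finite_measure M01"
  unfolding M01_def
  by (rule finite_measureI) (simp add: emeasure_restrict_space)

interpretation M01: finite_measure M01 by (rule M01_finite)

lemma meas_M01_iff: fixes f :: "real \<Rightarrow> real" shows "set_borel_measurable lborel {0..1} f \<longleftrightarrow> f \<in> borel_measurable M01"
  unfolding M01_def set_borel_measurable_def
  using borel_measurable_restrict_space_iff[of "{0..1}" lborel f] by simp

lemma int_M01_iff: fixes f :: "real \<Rightarrow> real" shows "set_integrable lborel {0..1} f \<longleftrightarrow> integrable M01 f"
  unfolding M01_def set_integrable_def
  using integrable_restrict_space[of "{0..1}" lborel f] by simp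

lemma lint_M01: fixes f :: "real \<Rightarrow> real" shows "(LINT x:{0..1}|lborel. f x) = integral\<^sup>L M01 f"
  unfolding M01_def set_lebesgue_integral_def
  using integral_restrict_space[of "{0..1}" lborel f] by simp

lemma sub_int_M01:
  fixes f :: "real \<Rightarrow> real"
  assumes "b \<le> 1" "0 \<le> a"
  shows "(LINT y:{a..b}|lborel. f y) = integral\<^sup>L M01 (\<lambda>y. indicator {a..b} y * f y)"
proof -
  have "(LINT y:{a..b}|lborel. f y) = integral\<^sup>L lborel (\<lambda>y. indicator {0..1} y *\<^sub>R (indicator {a..b} y * f y))"
    unfolding set_lebesgue_integral_def
    by (rule Bochner_Integration.integral_cong) (use assms in \<open>auto simp: indicator_def\<close>)
  also have "\<dots> = integral\<^sup>L M01 (\<lambda>y. indicator {a..b} y * f y)"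
    unfolding M01_def using integral_restrict_space[of "{0..1}" lborel "\<lambda>y. indicator {a..b} y * f y"] by simp
  finally show ?thesis .
qed

lemma cont_meas_M01: fixes f :: "real \<Rightarrow> real" shows "continuous_on {0..1} f \<Longrightarrow> f \<in> borel_measurable M01"
  unfolding M01_def
  by (metis borel_measurable_continuous_on_restrict measurable_cong_sets sets_lborel sets_restrict_space)

lemma sqint01_iff: "sqint01 u \<longleftrightarrow> u \<in> borel_measurable M01 \<and> integrable M01 (\<lambda>x. (u x)^2)"
  unfolding sqint01_def meas_M01_iff int_M01_iff ..


definition L2 :: "(real \<Rightarrow> real) \<Rightarrow> bool" where
  "L2 u \<longleftrightarrow> u \<in> borel_measurable M01 \<and> integrable M01 (\<lambda>x. (u x)^2)"

lemma L2_sqint01: "sqint01 u \<longleftrightarrow> L2 u"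
  unfolding L2_def sqint01_iff ..

lemma L2_meas[measurable_dest]: "L2 u \<Longrightarrow> u \<in> borel_measurable M01"
  by (simp add: L2_def)

lemma L2_sq: "L2 u \<Longrightarrow> integrable M01 (\<lambda>x. (u x)^2)"
  by (simp add: L2_def)

lemma L2_prod: assumes "L2 u" "L2 v" shows "integrable M01 (\<lambda>x. u x * v x)"
proof (rule Bochner_Integration.integrable_bound)
  show "integrable M01 (\<lambda>x. (u x)^2 + (v x)^2)" using assms by (simp add: L2_def)
  show "(\<lambda>x. u x * v x) \<in> borel_measurable M01" using assms by (auto simp: L2_def intro!: borel_measurable_times)
  show "AE x in M01. norm (u x * v x) \<le> norm ((u x)^2 + (v x)^2)"
  proof (rule AE_I2)
    fix x
    have "2 * \<bar>u x * v x\<bar> \<le> (u x)^2 + (v x)^2"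
      using sum_squares_bound[of "\<bar>u x\<bar>" "\<bar>v x\<bar>"] by (simp add: abs_mult power2_eq_square)
    moreover have "0 \<le> (u x)^2 + (v x)^2" by simp
    ultimately show "norm (u x * v x) \<le> norm ((u x)^2 + (v x)^2)" by simp
  qed
qed

lemma L2_int: assumes "L2 u" shows "integrable M01 u"
proof (rule Bochner_Integration.integrable_bound)
  show "integrable M01 (\<lambda>x. 1 + (u x)^2)" using assms by (simp add: L2_def)
  show "u \<in> borel_measurable M01" using assms by (simp add: L2_def)
  show "AE x in M01. norm (u x) \<le> norm (1 + (u x)^2)"
  proof (rule AE_I2)
    fix x
    have "\<bar>u x\<bar> \<le> 1 + (u x)^2"
    proof (cases "\<bar>u x\<bar> \<le> 1")
      case True then show ?thesis by (smt (verit) zero_le_power2)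
    next
      case False
      then have "\<bar>u x\<bar> * 1 \<le> \<bar>u x\<bar> * \<bar>u x\<bar>" by (intro mult_left_mono) auto
      then show ?thesis by (simp add: power2_eq_square abs_mult_self)
    qed
    then show "norm (u x) \<le> norm (1 + (u x)^2)" by simp
  qed
qed

lemma L2_add[intro]: assumes "L2 u" "L2 v" shows "L2 (\<lambda>x. u x + v x)"
proof -
  have "integrable M01 (\<lambda>x. (u x)^2 + (v x)^2 + 2 * (u x * v x))"
    using L2_prod[OF assms] assms unfolding L2_def by (intro Bochner_Integration.integrable_add) auto
  moreover have "(\<lambda>x. u x + v x) \<in> borel_measurable M01"
    using assms unfolding L2_def by (intro borel_measurable_add) auto
  ultimately show ?thesis unfolding L2_def by (simp add: power2_sum mult.assoc)
qed

lemma L2_diff[intro]: assumes "L2 u" "L2 v" shows "L2 (\<lambda>x. u x - v x)"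
proof -
  have "integrable M01 (\<lambda>x. (u x)^2 + (v x)^2 - 2 * (u x * v x))"
    using L2_prod[OF assms] assms unfolding L2_def by (intro Bochner_Integration.integrable_add Bochner_Integration.integrable_diff) auto
  moreover have "(\<lambda>x. u x - v x) \<in> borel_measurable M01"
    using assms unfolding L2_def by (intro borel_measurable_diff) auto
  ultimately show ?thesis unfolding L2_def by (simp add: power2_diff mult.assoc)
qed

lemma L2_cmult[intro]: "L2 u \<Longrightarrow> L2 (\<lambda>x. c * u x)"
  unfolding L2_def by (auto simp: power_mult_distrib)

lemma L2_divc[intro]: "L2 u \<Longrightarrow> L2 (\<lambda>x. u x / c)"
  unfolding L2_def by (auto simp: power_divide)

lemma L2_const[intro]: "L2 (\<lambda>x. c)"
  unfolding L2_def by auto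

lemma L2_bmult:
  assumes "L2 u" "g \<in> borel_measurable M01" "\<And>x. x \<in> {0..1} \<Longrightarrow> \<bar>g x\<bar> \<le> B"
  shows "L2 (\<lambda>x. g x * u x)"
  unfolding L2_def
proof
  show "(\<lambda>x. g x * u x) \<in> borel_measurable M01" using assms by (auto simp: L2_def intro!: borel_measurable_times)
  show "integrable M01 (\<lambda>x. (g x * u x)\<^sup>2)"
  proof (rule Bochner_Integration.integrable_bound)
    show "integrable M01 (\<lambda>x. B^2 * (u x)^2)" using assms by (simp add: L2_def)
    show "(\<lambda>x. (g x * u x)\<^sup>2) \<in> borel_measurable M01" using assms by (auto simp: L2_def intro!: borel_measurable_times borel_measurable_power)
    show "AE x in M01. norm ((g x * u x)\<^sup>2) \<le> norm (B^2 * (u x)^2)"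
    proof (rule AE_I2)
      fix x assume "x \<in> space M01"
      then have "\<bar>g x\<bar> \<le> B" using assms by simp
      then have "(g x)^2 \<le> B^2" by (metis abs_ge_zero power2_abs power_mono)
      then show "norm ((g x * u x)\<^sup>2) \<le> norm (B^2 * (u x)^2)"
        by (simp add: power_mult_distrib mult_right_mono)
    qed
  qed
qed

lemma CS_aux:
  assumes "L2 u" "L2 v" "l > 0"
  shows "integral\<^sup>L M01 (\<lambda>x. \<bar>u x * v x\<bar>) \<le> (l * integral\<^sup>L M01 (\<lambda>x. (u x)^2) + integral\<^sup>L M01 (\<lambda>x. (v x)^2) / l) / 2"
proof -
  have "integral\<^sup>L M01 (\<lambda>x. \<bar>u x * v x\<bar>) \<le> integral\<^sup>L M01 (\<lambda>x. (l * (u x)^2 + (v x)^2 / l) / 2)"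
  proof (rule integral_mono)
    show "integrable M01 (\<lambda>x. \<bar>u x * v x\<bar>)" using L2_prod[OF assms(1,2)] by simp
    show "integrable M01 (\<lambda>x. (l * (u x)^2 + (v x)^2 / l) / 2)" using assms by (simp add: L2_def)
    fix x
    have "0 \<le> (l * \<bar>u x\<bar> - \<bar>v x\<bar>)^2" by simp
    then have "2 * l * \<bar>u x * v x\<bar> \<le> l * l * (u x)^2 + (v x)^2"
      by (simp add: power2_diff abs_mult power_mult_distrib algebra_simps power2_eq_square)
    moreover have "l * (l * (u x)^2 + (v x)^2 / l) = l * l * (u x)^2 + (v x)^2"
      using assms(3) by (simp add: field_simps)
    ultimately have "l * (2 * \<bar>u x * v x\<bar>) \<le> l * (l * (u x)^2 + (v x)^2 / l)"
      by simp
    then have "2 * \<bar>u x * v x\<bar> \<le> l * (u x)^2 + (v x)^2 / l"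
      using assms(3) by simp
    then show "\<bar>u x * v x\<bar> \<le> (l * (u x)^2 + (v x)^2 / l) / 2" by simp
  qed
  also have "\<dots> = (l * integral\<^sup>L M01 (\<lambda>x. (u x)^2) + integral\<^sup>L M01 (\<lambda>x. (v x)^2) / l) / 2"
    using assms by (simp add: L2_def)
  finally show ?thesis .
qed

lemma CS:
  assumes "L2 u" "L2 v"
  shows "integral\<^sup>L M01 (\<lambda>x. \<bar>u x * v x\<bar>) \<le> sqrt (integral\<^sup>L M01 (\<lambda>x. (u x)^2)) * sqrt (integral\<^sup>L M01 (\<lambda>x. (v x)^2))"
proof -
  define a where "a = integral\<^sup>L M01 (\<lambda>x. (u x)^2)"
  define b where "b = integral\<^sup>L M01 (\<lambda>x. (v x)^2)"
  define J where "J = integral\<^sup>L M01 (\<lambda>x. \<bar>u x * v x\<bar>)"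
  have a0: "a \<ge> 0" unfolding a_def by simp
  have b0: "b \<ge> 0" unfolding b_def by simp
  have J0: "J \<ge> 0" unfolding J_def by simp
  have H: "\<And>l. l > 0 \<Longrightarrow> J \<le> (l * a + b / l) / 2"
    using CS_aux[OF assms] unfolding a_def b_def J_def by blast
  show ?thesis
  proof (cases "a > 0 \<and> b > 0")
    case True
    define l where "l = sqrt b / sqrt a"
    have l: "l > 0" using True by (simp add: l_def)
    have sa: "sqrt a * sqrt a = a" "sqrt a > 0" using True by auto
    have sb: "sqrt b * sqrt b = b" "sqrt b > 0" using True by auto
    have "l * a = sqrt a * sqrt b" unfolding l_def using sa sb
      by (metis mult.commute nonzero_mult_div_cancel_left less_irrefl times_divide_eq_left)
    moreover have "b / l = sqrt a * sqrt b" unfolding l_def using sa sb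
      by (simp add: field_simps)
    ultimately show ?thesis using H[OF l] unfolding a_def b_def J_def by simp
  next
    case False
    have "J \<le> 0"
    proof (rule ccontr)
      assume "\<not> J \<le> 0"
      then have Jp: "J > 0" by simp
      show False
      proof (cases "a = 0")
        case True
        define l where "l = b / J + 1"
        have l: "l > 0" using b0 Jp by (simp add: l_def add_nonneg_pos)
        have "b / l < J"
          using Jp b0 unfolding l_def by (simp add: field_simps)
        have "J \<le> (b / l) / 2" using H[OF l] True by simp
        moreover have "b / l \<ge> 0" using b0 l by simp
        ultimately show False using \<open>b / l < J\<close> by (simp add: field_simps)
      next
        case False
        then have "b = 0" using \<open>\<not> (a > 0 \<and> b > 0)\<close> a0 b0 by simp
        define l where "l = J / (a + 1)"
        have l: "l > 0" using a0 Jp by (simp add: l_def)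
        have "l * a < J"
          using Jp a0 unfolding l_def by (simp add: field_simps)
        with H[OF l] \<open>b = 0\<close> J0 show False by simp
      qed
    qed
    then show ?thesis using J0 unfolding J_def by simp
  qed
qed


lemma Icc_sets_M01: "0 \<le> a \<Longrightarrow> b \<le> 1 \<Longrightarrow> {a..b} \<in> sets M01"
  using sets_M01_le[of "{a..b}"] by (simp add: Int_absorb2)

lemma si_int: fixes g :: "real \<Rightarrow> real" shows "integrable M01 g \<Longrightarrow> 0 \<le> a \<Longrightarrow> b \<le> 1 \<Longrightarrow> set_integrable lborel {a..b} g"
  by (rule set_integrable_subset[of _ "{0..1}"]) (auto simp: int_M01_iff)

lemma si_diff: fixes g h :: "real \<Rightarrow> real" shows "integrable M01 g \<Longrightarrow> integrable M01 h \<Longrightarrow> 0 \<le> a \<Longrightarrow> b \<le> 1 \<Longrightarrow>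
   (LINT y:{a..b}|lborel. g y - h y) = (LINT y:{a..b}|lborel. g y) - (LINT y:{a..b}|lborel. h y)"
  by (intro set_integral_diff si_int)

lemma si_add: fixes g h :: "real \<Rightarrow> real" shows "integrable M01 g \<Longrightarrow> integrable M01 h \<Longrightarrow> 0 \<le> a \<Longrightarrow> b \<le> 1 \<Longrightarrow>
   (LINT y:{a..b}|lborel. g y + h y) = (LINT y:{a..b}|lborel. g y) + (LINT y:{a..b}|lborel. h y)"
  by (intro set_integral_add si_int)

lemma si_bound:
  fixes g :: "real \<Rightarrow> real"
  assumes "integrable M01 g" "0 \<le> x" "x \<le> 1"
  shows "\<bar>LINT y:{0..x}|lborel. g y\<bar> \<le> integral\<^sup>L M01 (\<lambda>y. \<bar>g y\<bar>)"
proof -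
  have "(LINT y:{0..x}|lborel. g y) = integral\<^sup>L M01 (\<lambda>y. indicator {0..x} y * g y)"
    using assms by (intro sub_int_M01) auto
  also have "\<bar>\<dots>\<bar> \<le> integral\<^sup>L M01 (\<lambda>y. \<bar>g y\<bar>)"
  proof (rule integral_abs_bound_integral)
    show "integrable M01 (\<lambda>y. indicator {0..x} y * g y)"
      using integrable_real_mult_indicator[OF Icc_sets_M01[of 0 x] assms(1)] assms by (simp add: mult.commute)
  qed (use assms in \<open>auto simp: indicator_def\<close>)
  finally show ?thesis .
qed

lemma si_cont:
  fixes g :: "real \<Rightarrow> real"
  assumes "integrable M01 g"
  shows "continuous_on {0..1} (\<lambda>x. LINT y:{0..x}|lborel. g y)"
proof -
  have "set_integrable lborel {0..1} g" using assms by (simp add: int_M01_iff)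
  then have "g integrable_on {0..1}" by (rule set_borel_integral_eq_integral(1))
  then have "continuous_on {0..1} (\<lambda>x. integral {0..x} g)" by (rule indefinite_integral_continuous_1)
  moreover have "(LINT y:{0..x}|lborel. g y) = integral {0..x} g" if "x \<in> {0..1}" for x
    using si_int[OF assms, of 0 x] that by (intro set_borel_integral_eq_integral(2)) auto
  ultimately show ?thesis by (metis (no_types, lifting) continuous_on_eq)
qed

lemma int_abs_diff_le:
  fixes a b :: "real \<Rightarrow> real"
  assumes "integrable M01 a" "integrable M01 b"
  shows "\<bar>integral\<^sup>L M01 a - integral\<^sup>L M01 b\<bar> \<le> integral\<^sup>L M01 (\<lambda>x. \<bar>a x - b x\<bar>)"
proof -
  have "integral\<^sup>L M01 a - integral\<^sup>L M01 b = integral\<^sup>L M01 (\<lambda>x. a x - b x)" using assms by simp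
  also have "\<bar>\<dots>\<bar> \<le> integral\<^sup>L M01 (\<lambda>x. \<bar>a x - b x\<bar>)"
    by (rule integral_abs_bound_integral) (use assms in auto)
  finally show ?thesis .
qed

lemma cont_bounded01:
  assumes "continuous_on {0..1} (g :: real \<Rightarrow> real)"
  shows "\<exists>M. \<forall>x\<in>{0..1}. \<bar>g x\<bar> \<le> M"
proof -
  have "compact (g ` {0..1})" by (rule compact_continuous_image[OF assms]) simp
  then obtain M where "\<forall>y\<in>g ` {0..1}. norm y \<le> M" using compact_imp_bounded bounded_iff by metis
  then show ?thesis by auto
qed


definition l2lim :: "real filter \<Rightarrow> (real \<Rightarrow> real \<Rightarrow> real) \<Rightarrow> (real \<Rightarrow> real) \<Rightarrow> bool" where
  "l2lim F a b \<longleftrightarrow> L2 b \<and> eventually (\<lambda>s. L2 (a s)) F \<and>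
     ((\<lambda>s. integral\<^sup>L M01 (\<lambda>x. (a s x - b x)^2)) \<longlongrightarrow> 0) F"

definition l1lim :: "real filter \<Rightarrow> (real \<Rightarrow> real \<Rightarrow> real) \<Rightarrow> (real \<Rightarrow> real) \<Rightarrow> bool" where
  "l1lim F a b \<longleftrightarrow> integrable M01 b \<and> eventually (\<lambda>s. integrable M01 (a s)) F \<and>
     ((\<lambda>s. integral\<^sup>L M01 (\<lambda>x. \<bar>a s x - b x\<bar>)) \<longlongrightarrow> 0) F"

definition ulim :: "real filter \<Rightarrow> (real \<Rightarrow> real \<Rightarrow> real) \<Rightarrow> (real \<Rightarrow> real) \<Rightarrow> bool" where
  "ulim F a b \<longleftrightarrow> continuous_on {0..1} b \<and> eventually (\<lambda>s. continuous_on {0..1} (a s)) F \<and>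
     (\<exists>B. (B \<longlongrightarrow> 0) F \<and> eventually (\<lambda>s. \<forall>x\<in>{0..1}. \<bar>a s x - b x\<bar> \<le> B s) F)"

definition Q :: "real \<Rightarrow> (real \<Rightarrow> real \<Rightarrow> real) \<Rightarrow> real \<Rightarrow> real \<Rightarrow> real" where
  "Q t u s x = (u s x - u t x) / (s - t)"

lemma div_prod_aux: "(p - p') / (d::real) * q + p' * ((q - q') / d) = (p * q - p' * q') / d"
proof -
  have "(p - p') / d * q + p' * ((q - q') / d) = ((p - p') * q) / d + (p' * (q - q')) / d" by simp
  also have "\<dots> = ((p - p') * q + p' * (q - q')) / d" by (simp add: add_divide_distrib)
  also have "(p - p') * q + p' * (q - q') = p * q - p' * q'" by (simp add: algebra_simps)
  finally show ?thesis .
qed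

lemma Q_mult: "Q t (\<lambda>s x. a s x * b s x) s x = Q t a s x * b s x + a t x * Q t b s x"
  unfolding Q_def using div_prod_aux[of "a s x" "a t x" "s - t" "b s x" "b t x"] by simp

lemma l2lim_const: "L2 b \<Longrightarrow> l2lim F (\<lambda>s. b) b"
  unfolding l2lim_def by simp

lemma sq_le2: "((p::real) + q)^2 \<le> 2 * p^2 + 2 * q^2"
proof -
  have "0 \<le> (p - q)^2" by simp
  then show ?thesis by (simp add: power2_sum power2_diff)
qed

lemma l2_prod_l1:
  assumes A: "l2lim F a a'" and B: "l2lim F b b'"
  shows "l1lim F (\<lambda>s x. a s x * b s x) (\<lambda>x. a' x * b' x)"
proof -
  have La: "L2 a'" and Lb: "L2 b'" using A B by (auto simp: l2lim_def)
  define da where "da s = integral\<^sup>L M01 (\<lambda>x. (a s x - a' x)^2)" for s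
  define db where "db s = integral\<^sup>L M01 (\<lambda>x. (b s x - b' x)^2)" for s
  define Ca where "Ca = integral\<^sup>L M01 (\<lambda>x. (a' x)^2)"
  define Cb where "Cb = integral\<^sup>L M01 (\<lambda>x. (b' x)^2)"
  have da: "(da \<longlongrightarrow> 0) F" using A unfolding l2lim_def da_def by auto
  have db: "(db \<longlongrightarrow> 0) F" using B unfolding l2lim_def db_def by auto
  have ev: "eventually (\<lambda>s. L2 (a s) \<and> L2 (b s)) F" using A B unfolding l2lim_def
    by (auto intro: eventually_conj)
  define U where "U s = sqrt (da s) * sqrt (2 * db s + 2 * Cb) + sqrt Ca * sqrt (db s)" for s
  have U: "(U \<longlongrightarrow> 0) F"
  proof -
    have "(U \<longlongrightarrow> sqrt 0 * sqrt (2 * 0 + 2 * Cb) + sqrt Ca * sqrt 0) F"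
      unfolding U_def by (intro tendsto_intros da db)
    then show ?thesis by simp
  qed
  have bound: "eventually (\<lambda>s. integral\<^sup>L M01 (\<lambda>x. \<bar>a s x * b s x - a' x * b' x\<bar>) \<le> U s) F"
    using ev
  proof (rule eventually_mono)
    fix s assume "L2 (a s) \<and> L2 (b s)"
    then have Las: "L2 (a s)" and Lbs: "L2 (b s)" by auto
    have L1: "L2 (\<lambda>x. a s x - a' x)" and L2': "L2 (\<lambda>x. b s x - b' x)" using Las Lbs La Lb by auto
    have "integral\<^sup>L M01 (\<lambda>x. \<bar>a s x * b s x - a' x * b' x\<bar>)
        \<le> integral\<^sup>L M01 (\<lambda>x. \<bar>(a s x - a' x) * b s x\<bar> + \<bar>a' x * (b s x - b' x)\<bar>)"
    proof (rule integral_mono)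
      show "integrable M01 (\<lambda>x. \<bar>a s x * b s x - a' x * b' x\<bar>)"
        using L2_prod[OF Las Lbs] L2_prod[OF La Lb] by auto
      show "integrable M01 (\<lambda>x. \<bar>(a s x - a' x) * b s x\<bar> + \<bar>a' x * (b s x - b' x)\<bar>)"
        using L2_prod[OF L1 Lbs] L2_prod[OF La L2'] by auto
      fix x
      have "a s x * b s x - a' x * b' x = (a s x - a' x) * b s x + a' x * (b s x - b' x)"
        by (simp add: algebra_simps)
      then show "\<bar>a s x * b s x - a' x * b' x\<bar> \<le> \<bar>(a s x - a' x) * b s x\<bar> + \<bar>a' x * (b s x - b' x)\<bar>"
        by simp
    qed
    also have "\<dots> = integral\<^sup>L M01 (\<lambda>x. \<bar>(a s x - a' x) * b s x\<bar>) + integral\<^sup>L M01 (\<lambda>x. \<bar>a' x * (b s x - b' x)\<bar>)"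
      using L2_prod[OF L1 Lbs] L2_prod[OF La L2'] by (intro Bochner_Integration.integral_add) auto
    also have "\<dots> \<le> sqrt (da s) * sqrt (integral\<^sup>L M01 (\<lambda>x. (b s x)^2)) + sqrt Ca * sqrt (db s)"
      using CS[OF L1 Lbs] CS[OF La L2'] unfolding da_def db_def Ca_def by (intro add_mono) auto
    also have "\<dots> \<le> U s"
    proof -
      have "integral\<^sup>L M01 (\<lambda>x. (b s x)^2) \<le> integral\<^sup>L M01 (\<lambda>x. 2 * (b s x - b' x)^2 + 2 * (b' x)^2)"
      proof (rule integral_mono)
        show "integrable M01 (\<lambda>x. (b s x)\<^sup>2)" using Lbs by (simp add: L2_def)
        show "integrable M01 (\<lambda>x. 2 * (b s x - b' x)\<^sup>2 + 2 * (b' x)\<^sup>2)"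
          using L2' Lb by (simp add: L2_def)
        fix x show "(b s x)\<^sup>2 \<le> 2 * (b s x - b' x)\<^sup>2 + 2 * (b' x)\<^sup>2"
          using sq_le2[of "b s x - b' x" "b' x"] by simp
      qed
      also have "\<dots> = 2 * db s + 2 * Cb"
        using L2' Lb unfolding db_def Cb_def by (simp add: L2_def)
      finally have "sqrt (integral\<^sup>L M01 (\<lambda>x. (b s x)^2)) \<le> sqrt (2 * db s + 2 * Cb)" by simp
      moreover have "0 \<le> da s" unfolding da_def by simp
      moreover have "0 \<le> Ca" unfolding Ca_def by simp
      ultimately show ?thesis unfolding U_def by (intro add_mono mult_left_mono) auto
    qed
    finally show "integral\<^sup>L M01 (\<lambda>x. \<bar>a s x * b s x - a' x * b' x\<bar>) \<le> U s" .
  qed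
  have "((\<lambda>s. integral\<^sup>L M01 (\<lambda>x. \<bar>a s x * b s x - a' x * b' x\<bar>)) \<longlongrightarrow> 0) F"
    by (rule tendsto_sandwich[OF _ bound tendsto_const U]) (simp add: always_eventually)
  moreover have "eventually (\<lambda>s. integrable M01 (\<lambda>x. a s x * b s x)) F"
    using ev by (rule eventually_mono) (auto intro: L2_prod)
  ultimately show ?thesis unfolding l1lim_def using L2_prod[OF La Lb] by auto
qed


lemma l1_const: "integrable M01 b \<Longrightarrow> l1lim F (\<lambda>s. b) b"
  unfolding l1lim_def by simp

lemma l1_add:
  assumes A: "l1lim F a a'" and B: "l1lim F b b'"
  shows "l1lim F (\<lambda>s x. a s x + b s x) (\<lambda>x. a' x + b' x)"
proof -
  have ev: "eventually (\<lambda>s. integrable M01 (a s) \<and> integrable M01 (b s)) F"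
    using A B unfolding l1lim_def by (auto intro: eventually_conj)
  have lim: "((\<lambda>s. integral\<^sup>L M01 (\<lambda>x. \<bar>a s x - a' x\<bar>) + integral\<^sup>L M01 (\<lambda>x. \<bar>b s x - b' x\<bar>)) \<longlongrightarrow> 0 + 0) F"
    using A B unfolding l1lim_def by (intro tendsto_add) auto
  have bd: "eventually (\<lambda>s. integral\<^sup>L M01 (\<lambda>x. \<bar>(a s x + b s x) - (a' x + b' x)\<bar>) \<le>
      integral\<^sup>L M01 (\<lambda>x. \<bar>a s x - a' x\<bar>) + integral\<^sup>L M01 (\<lambda>x. \<bar>b s x - b' x\<bar>)) F"
    using ev
  proof (rule eventually_mono)
    fix s assume i: "integrable M01 (a s) \<and> integrable M01 (b s)"
    have "integral\<^sup>L M01 (\<lambda>x. \<bar>(a s x + b s x) - (a' x + b' x)\<bar>) \<le>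
       integral\<^sup>L M01 (\<lambda>x. \<bar>a s x - a' x\<bar> + \<bar>b s x - b' x\<bar>)"
      using i A B unfolding l1lim_def by (intro integral_mono) auto
    also have "\<dots> = integral\<^sup>L M01 (\<lambda>x. \<bar>a s x - a' x\<bar>) + integral\<^sup>L M01 (\<lambda>x. \<bar>b s x - b' x\<bar>)"
      using i A B unfolding l1lim_def by (intro Bochner_Integration.integral_add) auto
    finally show "integral\<^sup>L M01 (\<lambda>x. \<bar>(a s x + b s x) - (a' x + b' x)\<bar>) \<le>
      integral\<^sup>L M01 (\<lambda>x. \<bar>a s x - a' x\<bar>) + integral\<^sup>L M01 (\<lambda>x. \<bar>b s x - b' x\<bar>)" .
  qed
  have "((\<lambda>s. integral\<^sup>L M01 (\<lambda>x. \<bar>(a s x + b s x) - (a' x + b' x)\<bar>)) \<longlongrightarrow> 0) F"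
    by (rule tendsto_sandwich[OF _ bd tendsto_const]) (use lim in \<open>auto simp: always_eventually\<close>)
  moreover have "eventually (\<lambda>s. integrable M01 (\<lambda>x. a s x + b s x)) F"
    using ev by (rule eventually_mono) auto
  ultimately show ?thesis using A B unfolding l1lim_def by auto
qed

lemma l1_cmult:
  assumes A: "l1lim F a a'"
  shows "l1lim F (\<lambda>s x. c * a s x) (\<lambda>x. c * a' x)"
proof -
  have "((\<lambda>s. \<bar>c\<bar> * integral\<^sup>L M01 (\<lambda>x. \<bar>a s x - a' x\<bar>)) \<longlongrightarrow> \<bar>c\<bar> * 0) F"
    using A unfolding l1lim_def by (intro tendsto_mult) auto
  moreover have "(\<lambda>s. integral\<^sup>L M01 (\<lambda>x. \<bar>c * a s x - c * a' x\<bar>)) = (\<lambda>s. \<bar>c\<bar> * integral\<^sup>L M01 (\<lambda>x. \<bar>a s x - a' x\<bar>))"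
    by (simp add: right_diff_distrib[symmetric] abs_mult)
  moreover have "eventually (\<lambda>s. integrable M01 (\<lambda>x. c * a s x)) F"
    using A unfolding l1lim_def by (auto elim: eventually_mono)
  ultimately show ?thesis using A unfolding l1lim_def by auto
qed

lemma l1_diff:
  assumes A: "l1lim F a a'" and B: "l1lim F b b'"
  shows "l1lim F (\<lambda>s x. a s x - b s x) (\<lambda>x. a' x - b' x)"
  using l1_add[OF A l1_cmult[OF B, of "-1"]] by simp

lemma l1_int:
  assumes A: "l1lim F a a'"
  shows "((\<lambda>s. integral\<^sup>L M01 (a s)) \<longlongrightarrow> integral\<^sup>L M01 a') F"
proof -
  define D where "D s = integral\<^sup>L M01 (\<lambda>x. \<bar>a s x - a' x\<bar>)" for s
  have D: "(D \<longlongrightarrow> 0) F" using A unfolding l1lim_def D_def by auto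
  have ia: "integrable M01 a'" using A by (simp add: l1lim_def)
  have ev: "eventually (\<lambda>s. integrable M01 (a s)) F" using A by (simp add: l1lim_def)
  have bd: "eventually (\<lambda>s. \<bar>integral\<^sup>L M01 (a s) - integral\<^sup>L M01 a'\<bar> \<le> D s) F"
    using ev by (rule eventually_mono) (use ia in \<open>simp add: D_def int_abs_diff_le\<close>)
  have "((\<lambda>s. \<bar>integral\<^sup>L M01 (a s) - integral\<^sup>L M01 a'\<bar>) \<longlongrightarrow> 0) F"
    by (rule tendsto_sandwich[OF _ bd tendsto_const D]) (simp add: always_eventually)
  then have "((\<lambda>s. integral\<^sup>L M01 (a s) - integral\<^sup>L M01 a') \<longlongrightarrow> 0) F"
    by (simp add: tendsto_rabs_zero_iff)
  then show ?thesis by (simp add: LIM_zero_iff)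
qed

lemma cont_int_mult:
  fixes g w :: "real \<Rightarrow> real"
  assumes "continuous_on {0..1} g" "integrable M01 w"
  shows "integrable M01 (\<lambda>x. g x * w x)"
proof -
  obtain M where M: "\<forall>x\<in>{0..1}. \<bar>g x\<bar> \<le> M" using cont_bounded01[OF assms(1)] by blast
  show ?thesis
  proof (rule Bochner_Integration.integrable_bound)
    show "integrable M01 (\<lambda>x. M * w x)" using assms by simp
    show "(\<lambda>x. g x * w x) \<in> borel_measurable M01"
      by (rule borel_measurable_times[OF cont_meas_M01[OF assms(1)] borel_measurable_integrable[OF assms(2)]])
    show "AE x in M01. norm (g x * w x) \<le> norm (M * w x)"
    proof (rule AE_I2)
      fix x assume "x \<in> space M01"
      then have "\<bar>g x\<bar> \<le> M" using M by simp
      then show "norm (g x * w x) \<le> norm (M * w x)"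
        by (simp add: abs_mult mult_right_mono)
    qed
  qed
qed

lemma ulim_pos: fixes a b :: "real \<Rightarrow> real" assumes "\<forall>x\<in>{0..1}. \<bar>a x - b x\<bar> \<le> (B::real)" shows "0 \<le> B"
proof -
  have "\<bar>a 0 - b 0\<bar> \<le> B" using bspec[OF assms, of 0] by simp
  then show ?thesis by linarith
qed

lemma ulim_l1_mult:
  assumes G: "ulim F g g'" and W: "l1lim F w w'"
  shows "l1lim F (\<lambda>s x. g s x * w s x) (\<lambda>x. g' x * w' x)"
proof -
  obtain B where B: "(B \<longlongrightarrow> 0) F" "eventually (\<lambda>s. \<forall>x\<in>{0..1}. \<bar>g s x - g' x\<bar> \<le> B s) F"
    using G unfolding ulim_def by blast
  obtain M where M: "\<forall>x\<in>{0..1}. \<bar>g' x\<bar> \<le> M" using cont_bounded01 G unfolding ulim_def by blast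
  have cg: "continuous_on {0..1} g'" using G by (simp add: ulim_def)
  have M0: "0 \<le> M" using bspec[OF M, of 0] by simp
  have iw: "integrable M01 w'" using W by (simp add: l1lim_def)
  define D where "D s = integral\<^sup>L M01 (\<lambda>x. \<bar>w s x - w' x\<bar>)" for s
  define Wc where "Wc = integral\<^sup>L M01 (\<lambda>x. \<bar>w' x\<bar>)"
  have D: "(D \<longlongrightarrow> 0) F" using W unfolding l1lim_def D_def by auto
  have ev: "eventually (\<lambda>s. continuous_on {0..1} (g s) \<and> integrable M01 (w s) \<and> (\<forall>x\<in>{0..1}. \<bar>g s x - g' x\<bar> \<le> B s)) F"
    using G W B(2) unfolding ulim_def l1lim_def by (auto intro: eventually_conj)
  have bd: "eventually (\<lambda>s. integral\<^sup>L M01 (\<lambda>x. \<bar>g s x * w s x - g' x * w' x\<bar>) \<le> B s * (D s + Wc) + M * D s) F"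
    using ev
  proof (rule eventually_mono)
    fix s assume a: "continuous_on {0..1} (g s) \<and> integrable M01 (w s) \<and> (\<forall>x\<in>{0..1}. \<bar>g s x - g' x\<bar> \<le> B s)"
    have Bs: "0 \<le> B s" using a ulim_pos by blast
    have i1: "integrable M01 (\<lambda>x. g s x * w s x)" using a by (intro cont_int_mult) auto
    have i2: "integrable M01 (\<lambda>x. g' x * w' x)" using cg iw by (intro cont_int_mult) auto
    have "integral\<^sup>L M01 (\<lambda>x. \<bar>g s x * w s x - g' x * w' x\<bar>) \<le>
        integral\<^sup>L M01 (\<lambda>x. B s * (\<bar>w s x - w' x\<bar> + \<bar>w' x\<bar>) + M * \<bar>w s x - w' x\<bar>)"
    proof (rule integral_mono)
      show "integrable M01 (\<lambda>x. \<bar>g s x * w s x - g' x * w' x\<bar>)" using i1 i2 by auto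
      show "integrable M01 (\<lambda>x. B s * (\<bar>w s x - w' x\<bar> + \<bar>w' x\<bar>) + M * \<bar>w s x - w' x\<bar>)"
        using a iw by auto
      fix x assume "x \<in> space M01"
      then have x: "x \<in> {0..1}" by simp
      have "g s x * w s x - g' x * w' x = (g s x - g' x) * w s x + g' x * (w s x - w' x)"
        by (simp add: algebra_simps)
      then have "\<bar>g s x * w s x - g' x * w' x\<bar> \<le> \<bar>(g s x - g' x) * w s x\<bar> + \<bar>g' x * (w s x - w' x)\<bar>"
        by (metis abs_triangle_ineq)
      then have "\<bar>g s x * w s x - g' x * w' x\<bar> \<le> \<bar>g s x - g' x\<bar> * \<bar>w s x\<bar> + \<bar>g' x\<bar> * \<bar>w s x - w' x\<bar>"
        by (simp add: abs_mult)
      also have "\<dots> \<le> B s * (\<bar>w s x - w' x\<bar> + \<bar>w' x\<bar>) + M * \<bar>w s x - w' x\<bar>"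
      proof (intro add_mono mult_mono)
        show "\<bar>g s x - g' x\<bar> \<le> B s" using a x by auto
        show "\<bar>w s x\<bar> \<le> \<bar>w s x - w' x\<bar> + \<bar>w' x\<bar>" by linarith
        show "\<bar>g' x\<bar> \<le> M" using M x by auto
      qed (use Bs M0 in auto)
      finally show "\<bar>g s x * w s x - g' x * w' x\<bar> \<le> B s * (\<bar>w s x - w' x\<bar> + \<bar>w' x\<bar>) + M * \<bar>w s x - w' x\<bar>" .
    qed
    also have "\<dots> = B s * (D s + Wc) + M * D s"
      using a iw unfolding D_def Wc_def by (simp add: distrib_left)
    finally show "integral\<^sup>L M01 (\<lambda>x. \<bar>g s x * w s x - g' x * w' x\<bar>) \<le> B s * (D s + Wc) + M * D s" .
  qed
  have lim: "((\<lambda>s. B s * (D s + Wc) + M * D s) \<longlongrightarrow> 0 * (0 + Wc) + M * 0) F"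
    by (intro tendsto_intros B D)
  have "((\<lambda>s. integral\<^sup>L M01 (\<lambda>x. \<bar>g s x * w s x - g' x * w' x\<bar>)) \<longlongrightarrow> 0) F"
    by (rule tendsto_sandwich[OF _ bd tendsto_const]) (use lim in \<open>auto simp: always_eventually\<close>)
  moreover have "eventually (\<lambda>s. integrable M01 (\<lambda>x. g s x * w s x)) F"
    using ev by (rule eventually_mono) (auto intro: cont_int_mult)
  ultimately show ?thesis using cg iw unfolding l1lim_def by (auto intro: cont_int_mult)
qed


lemma ulim_const: "continuous_on {0..1} b \<Longrightarrow> ulim F (\<lambda>s. b) b"
  unfolding ulim_def by (intro conjI exI[of _ "\<lambda>s. 0"]) auto

lemma ulim_cfun:
  assumes "(c \<longlongrightarrow> c0) F"
  shows "ulim F (\<lambda>s x. c s) (\<lambda>x. c0)"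
  unfolding ulim_def
proof (intro conjI exI[of _ "\<lambda>s. \<bar>c s - c0\<bar>"])
  show "((\<lambda>s. \<bar>c s - c0\<bar>) \<longlongrightarrow> 0) F"
    using assms by (simp add: tendsto_rabs_zero_iff LIM_zero)
qed auto

lemma ulim_add:
  assumes A: "ulim F a a'" and B: "ulim F b b'"
  shows "ulim F (\<lambda>s x. a s x + b s x) (\<lambda>x. a' x + b' x)"
proof -
  obtain Ba where Ba: "(Ba \<longlongrightarrow> 0) F" "eventually (\<lambda>s. \<forall>x\<in>{0..1}. \<bar>a s x - a' x\<bar> \<le> Ba s) F"
    using A unfolding ulim_def by blast
  obtain Bb where Bb: "(Bb \<longlongrightarrow> 0) F" "eventually (\<lambda>s. \<forall>x\<in>{0..1}. \<bar>b s x - b' x\<bar> \<le> Bb s) F"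
    using B unfolding ulim_def by blast
  have "((\<lambda>s. Ba s + Bb s) \<longlongrightarrow> 0 + 0) F" by (intro tendsto_add Ba Bb)
  moreover have "eventually (\<lambda>s. \<forall>x\<in>{0..1}. \<bar>(a s x + b s x) - (a' x + b' x)\<bar> \<le> Ba s + Bb s) F"
    using eventually_conj[OF Ba(2) Bb(2)]
  proof (rule eventually_mono)
    fix s assume "(\<forall>x\<in>{0..1}. \<bar>a s x - a' x\<bar> \<le> Ba s) \<and> (\<forall>x\<in>{0..1}. \<bar>b s x - b' x\<bar> \<le> Bb s)"
    then show "\<forall>x\<in>{0..1}. \<bar>(a s x + b s x) - (a' x + b' x)\<bar> \<le> Ba s + Bb s"
      by (smt (verit, ccfv_SIG))
  qed
  moreover have "eventually (\<lambda>s. continuous_on {0..1} (\<lambda>x. a s x + b s x)) F"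
    using eventually_conj[OF conjunct1[OF conjunct2[OF A[unfolded ulim_def]]] conjunct1[OF conjunct2[OF B[unfolded ulim_def]]]]
    by (rule eventually_mono) (auto intro: continuous_on_add)
  ultimately show ?thesis using A B unfolding ulim_def by (auto intro: continuous_on_add)
qed

lemma ulim_cmult:
  assumes A: "ulim F a a'"
  shows "ulim F (\<lambda>s x. c * a s x) (\<lambda>x. c * a' x)"
proof -
  obtain Ba where Ba: "(Ba \<longlongrightarrow> 0) F" "eventually (\<lambda>s. \<forall>x\<in>{0..1}. \<bar>a s x - a' x\<bar> \<le> Ba s) F"
    using A unfolding ulim_def by blast
  have "((\<lambda>s. \<bar>c\<bar> * Ba s) \<longlongrightarrow> \<bar>c\<bar> * 0) F" by (intro tendsto_mult Ba tendsto_const)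
  moreover have "eventually (\<lambda>s. \<forall>x\<in>{0..1}. \<bar>c * a s x - c * a' x\<bar> \<le> \<bar>c\<bar> * Ba s) F"
    using Ba(2)
  proof (rule eventually_mono)
    fix s assume h: "\<forall>x\<in>{0..1}. \<bar>a s x - a' x\<bar> \<le> Ba s"
    show "\<forall>x\<in>{0..1}. \<bar>c * a s x - c * a' x\<bar> \<le> \<bar>c\<bar> * Ba s"
    proof
      fix x :: real assume "x \<in> {0..1}"
      then have "\<bar>a s x - a' x\<bar> \<le> Ba s" using h by auto
      then have "\<bar>c\<bar> * \<bar>a s x - a' x\<bar> \<le> \<bar>c\<bar> * Ba s" by (intro mult_left_mono) auto
      then show "\<bar>c * a s x - c * a' x\<bar> \<le> \<bar>c\<bar> * Ba s" by (simp add: abs_mult right_diff_distrib[symmetric])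
    qed
  qed
  moreover have "eventually (\<lambda>s. continuous_on {0..1} (\<lambda>x. c * a s x)) F"
    using conjunct1[OF conjunct2[OF A[unfolded ulim_def]]]
    by (rule eventually_mono) (auto intro: continuous_on_mult continuous_on_const)
  ultimately show ?thesis using A unfolding ulim_def by (auto intro: continuous_on_mult continuous_on_const)
qed

lemma ulim_diff:
  assumes A: "ulim F a a'" and B: "ulim F b b'"
  shows "ulim F (\<lambda>s x. a s x - b s x) (\<lambda>x. a' x - b' x)"
  using ulim_add[OF A ulim_cmult[OF B, of "-1"]] by simp

lemma ulim_mult:
  assumes A: "ulim F a a'" and B: "ulim F b b'"
  shows "ulim F (\<lambda>s x. a s x * b s x) (\<lambda>x. a' x * b' x)"
proof -
  obtain Ba where Ba: "(Ba \<longlongrightarrow> 0) F" "eventually (\<lambda>s. \<forall>x\<in>{0..1}. \<bar>a s x - a' x\<bar> \<le> Ba s) F"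
    using A unfolding ulim_def by blast
  obtain Bb where Bb: "(Bb \<longlongrightarrow> 0) F" "eventually (\<lambda>s. \<forall>x\<in>{0..1}. \<bar>b s x - b' x\<bar> \<le> Bb s) F"
    using B unfolding ulim_def by blast
  obtain Ma where Ma: "\<forall>x\<in>{0..1}. \<bar>a' x\<bar> \<le> Ma" using cont_bounded01 A unfolding ulim_def by blast
  obtain Mb where Mb: "\<forall>x\<in>{0..1}. \<bar>b' x\<bar> \<le> Mb" using cont_bounded01 B unfolding ulim_def by blast
  have Ma0: "0 \<le> Ma" using bspec[OF Ma, of 0] by simp
  have "((\<lambda>s. Ba s * (Mb + Bb s) + Ma * Bb s) \<longlongrightarrow> 0 * (Mb + 0) + Ma * 0) F"
    by (intro tendsto_intros Ba Bb)
  moreover have "eventually (\<lambda>s. \<forall>x\<in>{0..1}. \<bar>a s x * b s x - a' x * b' x\<bar> \<le> Ba s * (Mb + Bb s) + Ma * Bb s) F"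
    using eventually_conj[OF Ba(2) Bb(2)]
  proof (rule eventually_mono)
    fix s assume h: "(\<forall>x\<in>{0..1}. \<bar>a s x - a' x\<bar> \<le> Ba s) \<and> (\<forall>x\<in>{0..1}. \<bar>b s x - b' x\<bar> \<le> Bb s)"
    show "\<forall>x\<in>{0..1}. \<bar>a s x * b s x - a' x * b' x\<bar> \<le> Ba s * (Mb + Bb s) + Ma * Bb s"
    proof
      fix x :: real assume x: "x \<in> {0..1}"
      have e: "a s x * b s x - a' x * b' x = (a s x - a' x) * b s x + a' x * (b s x - b' x)"
        by (simp add: algebra_simps)
      have "\<bar>a s x * b s x - a' x * b' x\<bar> \<le> \<bar>(a s x - a' x) * b s x\<bar> + \<bar>a' x * (b s x - b' x)\<bar>"
        unfolding e by (rule abs_triangle_ineq)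
      also have "\<dots> = \<bar>a s x - a' x\<bar> * \<bar>b s x\<bar> + \<bar>a' x\<bar> * \<bar>b s x - b' x\<bar>" by (simp add: abs_mult)
      also have "\<dots> \<le> Ba s * (Mb + Bb s) + Ma * Bb s"
      proof (intro add_mono mult_mono)
        show "\<bar>a s x - a' x\<bar> \<le> Ba s" using h x by auto
        show "\<bar>b s x\<bar> \<le> Mb + Bb s" using h x Mb by fastforce
        show "\<bar>a' x\<bar> \<le> Ma" using Ma x by auto
        show "\<bar>b s x - b' x\<bar> \<le> Bb s" using h x by auto
        show "0 \<le> Ba s" using h ulim_pos[of "a s" a' "Ba s"] by auto
      qed (use Ma0 in auto)
      finally show "\<bar>a s x * b s x - a' x * b' x\<bar> \<le> Ba s * (Mb + Bb s) + Ma * Bb s" .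
    qed
  qed
  moreover have "eventually (\<lambda>s. continuous_on {0..1} (\<lambda>x. a s x * b s x)) F"
    using eventually_conj[OF conjunct1[OF conjunct2[OF A[unfolded ulim_def]]] conjunct1[OF conjunct2[OF B[unfolded ulim_def]]]]
    by (rule eventually_mono) (auto intro: continuous_on_mult)
  ultimately show ?thesis using A B unfolding ulim_def by (auto intro: continuous_on_mult)
qed

lemma l1_si_ulim:
  assumes A: "l1lim F a a'"
  shows "ulim F (\<lambda>s x. LINT y:{0..x}|lborel. a s y) (\<lambda>x. LINT y:{0..x}|lborel. a' y)"
proof -
  have ia: "integrable M01 a'" using A by (simp add: l1lim_def)
  have ev: "eventually (\<lambda>s. integrable M01 (a s)) F" using A by (simp add: l1lim_def)
  have "((\<lambda>s. integral\<^sup>L M01 (\<lambda>x. \<bar>a s x - a' x\<bar>)) \<longlongrightarrow> 0) F" using A by (simp add: l1lim_def)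
  moreover have "eventually (\<lambda>s. \<forall>x\<in>{0..1}. \<bar>(LINT y:{0..x}|lborel. a s y) - (LINT y:{0..x}|lborel. a' y)\<bar>
      \<le> integral\<^sup>L M01 (\<lambda>x. \<bar>a s x - a' x\<bar>)) F"
    using ev
  proof (rule eventually_mono)
    fix s assume i: "integrable M01 (a s)"
    show "\<forall>x\<in>{0..1}. \<bar>(LINT y:{0..x}|lborel. a s y) - (LINT y:{0..x}|lborel. a' y)\<bar>
      \<le> integral\<^sup>L M01 (\<lambda>x. \<bar>a s x - a' x\<bar>)"
    proof
      fix x :: real assume "x \<in> {0..1}"
      then have x: "0 \<le> x" "x \<le> 1" by auto
      have "(LINT y:{0..x}|lborel. a s y) - (LINT y:{0..x}|lborel. a' y) = (LINT y:{0..x}|lborel. a s y - a' y)"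
        using si_diff[OF i ia, of 0 x] x by simp
      also have "\<bar>\<dots>\<bar> \<le> integral\<^sup>L M01 (\<lambda>y. \<bar>a s y - a' y\<bar>)"
        using i ia x by (intro si_bound) auto
      finally show "\<bar>(LINT y:{0..x}|lborel. a s y) - (LINT y:{0..x}|lborel. a' y)\<bar> \<le> integral\<^sup>L M01 (\<lambda>x. \<bar>a s x - a' x\<bar>)" .
    qed
  qed
  moreover have "eventually (\<lambda>s. continuous_on {0..1} (\<lambda>x. LINT y:{0..x}|lborel. a s y)) F"
    using ev by (rule eventually_mono) (rule si_cont)
  ultimately show ?thesis unfolding ulim_def using si_cont[OF ia] by blast
qed


lemma ulim_cong:
  assumes "ulim F a b" "eventually (\<lambda>s. \<forall>x\<in>{0..1}. a s x = a2 s x) F" "\<forall>x\<in>{0..1}. b x = b2 x"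
  shows "ulim F a2 b2"
proof -
  obtain B where B: "(B \<longlongrightarrow> 0) F" "eventually (\<lambda>s. \<forall>x\<in>{0..1}. \<bar>a s x - b x\<bar> \<le> B s) F"
    using assms(1) unfolding ulim_def by blast
  have "eventually (\<lambda>s. \<forall>x\<in>{0..1}. \<bar>a2 s x - b2 x\<bar> \<le> B s) F"
    using eventually_conj[OF B(2) assms(2)] by (rule eventually_mono) (use assms(3) in auto)
  moreover have "eventually (\<lambda>s. continuous_on {0..1} (a2 s)) F"
    using eventually_conj[OF conjunct1[OF conjunct2[OF assms(1)[unfolded ulim_def]]] assms(2)]
    by (rule eventually_mono) (auto intro: continuous_on_cong[THEN iffD1])
  moreover have "continuous_on {0..1} b2"
    using assms(1,3) unfolding ulim_def by (auto intro: continuous_on_cong[THEN iffD1])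
  ultimately show ?thesis using B(1) unfolding ulim_def by blast
qed

lemma l1lim_cong:
  assumes "l1lim F a b" "eventually (\<lambda>s. \<forall>x\<in>{0..1}. a s x = a2 s x) F" "\<forall>x\<in>{0..1}. b x = b2 x"
  shows "l1lim F a2 b2"
proof -
  have ib: "integrable M01 b2"
  proof -
    have "integrable M01 b \<longleftrightarrow> integrable M01 b2" by (rule Bochner_Integration.integrable_cong) (use assms(3) in simp_all)
    then show ?thesis using assms(1) unfolding l1lim_def by blast
  qed
  have "eventually (\<lambda>s. integrable M01 (a2 s) \<and> integral\<^sup>L M01 (\<lambda>x. \<bar>a2 s x - b2 x\<bar>) = integral\<^sup>L M01 (\<lambda>x. \<bar>a s x - b x\<bar>)) F"
    using eventually_conj[OF conjunct1[OF conjunct2[OF assms(1)[unfolded l1lim_def]]] assms(2)]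
  proof (rule eventually_mono)
    fix s assume h: "integrable M01 (a s) \<and> (\<forall>x\<in>{0..1}. a s x = a2 s x)"
    show "integrable M01 (a2 s) \<and> integral\<^sup>L M01 (\<lambda>x. \<bar>a2 s x - b2 x\<bar>) = integral\<^sup>L M01 (\<lambda>x. \<bar>a s x - b x\<bar>)"
    proof
      have "integrable M01 (a s) \<longleftrightarrow> integrable M01 (a2 s)" by (rule Bochner_Integration.integrable_cong) (use h in simp_all)
      then show "integrable M01 (a2 s)" using h by blast
      show "integral\<^sup>L M01 (\<lambda>x. \<bar>a2 s x - b2 x\<bar>) = integral\<^sup>L M01 (\<lambda>x. \<bar>a s x - b x\<bar>)"
        using h assms(3) by (intro Bochner_Integration.integral_cong) auto
    qed
  qed
  then have ev2: "eventually (\<lambda>s. integrable M01 (a2 s)) F"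
    and eq: "eventually (\<lambda>s. integral\<^sup>L M01 (\<lambda>x. \<bar>a2 s x - b2 x\<bar>) = integral\<^sup>L M01 (\<lambda>x. \<bar>a s x - b x\<bar>)) F"
    by (auto elim: eventually_mono)
  have lim: "((\<lambda>s. integral\<^sup>L M01 (\<lambda>x. \<bar>a s x - b x\<bar>)) \<longlongrightarrow> 0) F"
    using assms(1) by (simp add: l1lim_def)
  have "((\<lambda>s. integral\<^sup>L M01 (\<lambda>x. \<bar>a2 s x - b2 x\<bar>)) \<longlongrightarrow> 0) F"
    using lim by (rule Lim_transform_eventually) (rule eventually_mono[OF eq], simp)
  with ib \<open>eventually (\<lambda>s. integrable M01 (a2 s)) F\<close> show ?thesis unfolding l1lim_def by blast
qed


lemma l2_deriv_cont:
  assumes A: "l2lim F (Q t u) u'" and Lt: "L2 (u t)"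
    and ne: "eventually (\<lambda>s. s \<noteq> t) F" and st: "((\<lambda>s. s) \<longlongrightarrow> t) F"
  shows "l2lim F u (u t)"
proof -
  have Lu': "L2 u'" using A by (simp add: l2lim_def)
  define d where "d s = integral\<^sup>L M01 (\<lambda>x. (Q t u s x - u' x)^2)" for s
  define C where "C = integral\<^sup>L M01 (\<lambda>x. (u' x)^2)"
  have d: "(d \<longlongrightarrow> 0) F" using A unfolding l2lim_def d_def by auto
  have ev: "eventually (\<lambda>s. s \<noteq> t \<and> L2 (Q t u s)) F"
    using ne A unfolding l2lim_def by (auto intro: eventually_conj)
  have rep: "u s = (\<lambda>x. u t x + (s - t) * Q t u s x)" if "s \<noteq> t" for s
    using that by (auto simp: Q_def)
  have evL: "eventually (\<lambda>s. L2 (u s)) F"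
    using ev by (rule eventually_mono) (use Lt rep in \<open>auto intro!: L2_add L2_cmult\<close>)
  have bd: "eventually (\<lambda>s. integral\<^sup>L M01 (\<lambda>x. (u s x - u t x)^2) \<le> (s - t)^2 * (2 * d s + 2 * C)) F"
    using ev
  proof (rule eventually_mono)
    fix s assume h: "s \<noteq> t \<and> L2 (Q t u s)"
    have LQ: "L2 (Q t u s)" using h by simp
    have LQd: "L2 (\<lambda>x. Q t u s x - u' x)" using LQ Lu' by auto
    have "integral\<^sup>L M01 (\<lambda>x. (u s x - u t x)^2) = integral\<^sup>L M01 (\<lambda>x. (s - t)^2 * (Q t u s x)^2)"
      using h by (intro Bochner_Integration.integral_cong) (auto simp: Q_def power_divide)
    also have "\<dots> = (s - t)^2 * integral\<^sup>L M01 (\<lambda>x. (Q t u s x)^2)" by simp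
    also have "\<dots> \<le> (s - t)^2 * (2 * d s + 2 * C)"
    proof (rule mult_left_mono)
      have "integral\<^sup>L M01 (\<lambda>x. (Q t u s x)^2) \<le> integral\<^sup>L M01 (\<lambda>x. 2 * (Q t u s x - u' x)^2 + 2 * (u' x)^2)"
      proof (rule integral_mono)
        show "integrable M01 (\<lambda>x. (Q t u s x)\<^sup>2)" using LQ by (simp add: L2_def)
        show "integrable M01 (\<lambda>x. 2 * (Q t u s x - u' x)\<^sup>2 + 2 * (u' x)\<^sup>2)"
          using LQd Lu' by (simp add: L2_def)
        fix x show "(Q t u s x)\<^sup>2 \<le> 2 * (Q t u s x - u' x)\<^sup>2 + 2 * (u' x)\<^sup>2"
          using sq_le2[of "Q t u s x - u' x" "u' x"] by simp
      qed
      also have "\<dots> = 2 * d s + 2 * C" using LQd Lu' unfolding d_def C_def by (simp add: L2_def)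
      finally show "integral\<^sup>L M01 (\<lambda>x. (Q t u s x)^2) \<le> 2 * d s + 2 * C" .
    qed simp
    finally show "integral\<^sup>L M01 (\<lambda>x. (u s x - u t x)^2) \<le> (s - t)^2 * (2 * d s + 2 * C)" .
  qed
  have lim: "((\<lambda>s. (s - t)^2 * (2 * d s + 2 * C)) \<longlongrightarrow> (t - t)^2 * (2 * 0 + 2 * C)) F"
    by (intro tendsto_intros st d)
  have "((\<lambda>s. integral\<^sup>L M01 (\<lambda>x. (u s x - u t x)^2)) \<longlongrightarrow> 0) F"
    by (rule tendsto_sandwich[OF _ bd tendsto_const]) (use lim in \<open>auto simp: always_eventually\<close>)
  with evL Lt show ?thesis unfolding l2lim_def by blast
qed

lemma ulim_deriv_cont:
  assumes A: "ulim F (Q t g) g'" and Ct: "continuous_on {0..1} (g t)"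
    and ne: "eventually (\<lambda>s. s \<noteq> t) F" and st: "((\<lambda>s. s) \<longlongrightarrow> t) F"
  shows "ulim F g (g t)"
proof -
  obtain B where B: "(B \<longlongrightarrow> 0) F" "eventually (\<lambda>s. \<forall>x\<in>{0..1}. \<bar>Q t g s x - g' x\<bar> \<le> B s) F"
    using A unfolding ulim_def by blast
  obtain M where M: "\<forall>x\<in>{0..1}. \<bar>g' x\<bar> \<le> M" using cont_bounded01 A unfolding ulim_def by blast
  have rep: "g s = (\<lambda>x. g t x + (s - t) * Q t g s x)" if "s \<noteq> t" for s
    using that by (auto simp: Q_def)
  have "eventually (\<lambda>s. continuous_on {0..1} (g s)) F"
    using eventually_conj[OF ne conjunct1[OF conjunct2[OF A[unfolded ulim_def]]]]
    by (rule eventually_mono) (use rep Ct in \<open>auto intro!: continuous_on_add continuous_on_mult continuous_on_const\<close>)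
  moreover have "eventually (\<lambda>s. \<forall>x\<in>{0..1}. \<bar>g s x - g t x\<bar> \<le> \<bar>s - t\<bar> * (M + B s)) F"
    using eventually_conj[OF ne B(2)]
  proof (rule eventually_mono)
    fix s assume h: "s \<noteq> t \<and> (\<forall>x\<in>{0..1}. \<bar>Q t g s x - g' x\<bar> \<le> B s)"
    show "\<forall>x\<in>{0..1}. \<bar>g s x - g t x\<bar> \<le> \<bar>s - t\<bar> * (M + B s)"
    proof
      fix x :: real assume x: "x \<in> {0..1}"
      have "\<bar>g s x - g t x\<bar> = \<bar>s - t\<bar> * \<bar>Q t g s x\<bar>"
        using h by (simp add: Q_def abs_divide)
      also have "\<dots> \<le> \<bar>s - t\<bar> * (M + B s)"
        using h x M by (intro mult_left_mono) fastforce+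
      finally show "\<bar>g s x - g t x\<bar> \<le> \<bar>s - t\<bar> * (M + B s)" .
    qed
  qed
  moreover have "((\<lambda>s. \<bar>s - t\<bar> * (M + B s)) \<longlongrightarrow> \<bar>t - t\<bar> * (M + 0)) F"
    by (intro tendsto_intros st B)
  ultimately show ?thesis using Ct unfolding ulim_def by auto
qed


lemma si_hk:
  fixes g :: "real \<Rightarrow> real"
  assumes "integrable M01 g" "0 \<le> a" "b \<le> 1"
  shows "g integrable_on {a..b}" "(LINT y:{a..b}|lborel. g y) = integral {a..b} g"
  using si_int[OF assms] by (auto intro: set_borel_integral_eq_integral)

definition th :: "(real \<Rightarrow> real) \<Rightarrow> real \<Rightarrow> real" where
  "th \<rho> x = (LINT y:{0..x}|lborel. (\<rho> y)^2)"

definition Kf :: "(real \<Rightarrow> real) \<Rightarrow> real \<Rightarrow> real \<Rightarrow> real" where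
  "Kf \<rho> x y = cosh (\<bar>LINT z:{min x y..max x y}|lborel. (\<rho> z)^2\<bar> - 1/2) / (2 * sinh (1/2))"

definition Af :: "(real \<Rightarrow> real) \<Rightarrow> (real \<Rightarrow> real) \<Rightarrow> real \<Rightarrow> real" where
  "Af \<rho> \<sigma> x = (LINT y:{0..x}|lborel. 2 * \<rho> y * \<sigma> y)"

definition hf :: "real \<Rightarrow> (real \<Rightarrow> real) \<Rightarrow> (real \<Rightarrow> real) \<Rightarrow> real \<Rightarrow> real" where
  "hf \<mu> \<rho> \<sigma> y = (\<rho> y)^2 * (Gop \<mu> \<rho> \<sigma> y)^2 + 2 * (\<sigma> y)^2"

definition Kmax :: real where "Kmax = cosh (1/2) / (2 * sinh (1/2))"

lemma Gop_Af: "Gop \<mu> \<rho> \<sigma> x = Af \<rho> \<sigma> x + \<mu> - integral\<^sup>L M01 (\<lambda>y. Af \<rho> \<sigma> y * (\<rho> y)^2)"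
  unfolding Gop_def Af_def lint_M01 ..

lemma Fop_Kf: "Fop \<mu> \<rho> \<sigma> x = integral\<^sup>L M01 (\<lambda>y. Kf \<rho> x y * hf \<mu> \<rho> \<sigma> y)"
  unfolding Fop_def Kf_def hf_def lint_M01 ..

lemma L2_sq_int: "L2 u \<Longrightarrow> integrable M01 (\<lambda>x. (u x)^2)" by (simp add: L2_def)

locale stat =
  fixes \<rho> \<sigma> :: "real \<Rightarrow> real" and \<mu> :: real
  assumes Lr: "L2 \<rho>" and Ls: "L2 \<sigma>" and norm1: "integral\<^sup>L M01 (\<lambda>x. (\<rho> x)^2) = 1"
begin

lemma ir2: "integrable M01 (\<lambda>x. (\<rho> x)^2)" using Lr by (simp add: L2_def)
lemma irs: "integrable M01 (\<lambda>x. 2 * \<rho> x * \<sigma> x)" using L2_prod[OF Lr Ls] by (simp add: mult.assoc)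

lemma th_cont: "continuous_on {0..1} (th \<rho>)"
  unfolding th_def using si_cont[OF ir2] by simp

lemma Af_cont: "continuous_on {0..1} (Af \<rho> \<sigma>)"
  unfolding Af_def using si_cont[OF irs] by simp

lemma G_cont: "continuous_on {0..1} (Gop \<mu> \<rho> \<sigma>)"
  unfolding Gop_Af by (intro continuous_intros Af_cont)

lemma th_hk: "x \<in> {0..1} \<Longrightarrow> th \<rho> x = integral {0..x} (\<lambda>y. (\<rho> y)^2)"
  unfolding th_def using si_hk(2)[OF ir2, of 0 x] by auto

lemma r2_hk: "0 \<le> a \<Longrightarrow> b \<le> 1 \<Longrightarrow> (\<lambda>y. (\<rho> y)^2) integrable_on {a..b}"
  using si_hk(1)[OF ir2] by auto

lemma th_le: assumes "0 \<le> x" "x \<le> y" "y \<le> 1"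
  shows "(LINT z:{x..y}|lborel. (\<rho> z)^2) = th \<rho> y - th \<rho> x" "th \<rho> x \<le> th \<rho> y"
proof -
  have "integral {0..x} (\<lambda>y. (\<rho> y)^2) + integral {x..y} (\<lambda>y. (\<rho> y)^2) = integral {0..y} (\<lambda>y. (\<rho> y)^2)"
    using Henstock_Kurzweil_Integration.integral_combine[of 0 x y "\<lambda>y. (\<rho> y)^2"] r2_hk[of 0 y] assms by auto
  moreover have "(LINT z:{x..y}|lborel. (\<rho> z)^2) = integral {x..y} (\<lambda>y. (\<rho> y)^2)"
    using si_hk(2)[OF ir2, of x y] assms by auto
  moreover have "0 \<le> integral {x..y} (\<lambda>y. (\<rho> y)^2)"
    using assms by (intro integral_nonneg r2_hk) auto
  ultimately show "(LINT z:{x..y}|lborel. (\<rho> z)^2) = th \<rho> y - th \<rho> x" "th \<rho> x \<le> th \<rho> y"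
    using th_hk[of x] th_hk[of y] assms by auto
qed

lemma th0: "th \<rho> 0 = 0" using th_hk[of 0] by simp
lemma th1: "th \<rho> 1 = 1" unfolding th_def lint_M01 norm1 ..

lemma th_range: "x \<in> {0..1} \<Longrightarrow> 0 \<le> th \<rho> x \<and> th \<rho> x \<le> 1"
  using th_le(2)[of 0 x] th_le(2)[of x 1] th0 th1 by auto

lemma Kf_th: assumes "x \<in> {0..1}" "y \<in> {0..1}"
  shows "Kf \<rho> x y = cosh (\<bar>th \<rho> x - th \<rho> y\<bar> - 1/2) / (2 * sinh (1/2))"
proof (cases "x \<le> y")
  case True
  then show ?thesis unfolding Kf_def using th_le[of x y] assms by (simp add: abs_minus_commute)
next
  case False
  then show ?thesis unfolding Kf_def using th_le[of y x] assms by simp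
qed

lemma Kf_bound: assumes "x \<in> {0..1}" "y \<in> {0..1}"
  shows "0 \<le> Kf \<rho> x y" "Kf \<rho> x y \<le> Kmax"
proof -
  have "\<bar>\<bar>th \<rho> x - th \<rho> y\<bar> - 1/2\<bar> \<le> 1/2" using th_range[OF assms(1)] th_range[OF assms(2)] by arith
  then have "cosh (\<bar>\<bar>th \<rho> x - th \<rho> y\<bar> - 1/2\<bar>) \<le> cosh (1/2)"
    by (subst cosh_real_nonneg_le_iff) auto
  then show "Kf \<rho> x y \<le> Kmax" unfolding Kf_th[OF assms] Kmax_def
    by (intro divide_right_mono) auto
  show "0 \<le> Kf \<rho> x y" unfolding Kf_def by (intro divide_nonneg_nonneg) auto
qed

lemma Kf_cont: "y \<in> {0..1} \<Longrightarrow> continuous_on {0..1} (\<lambda>x. Kf \<rho> x y)"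
proof -
  assume y: "y \<in> {0..1}"
  have "continuous_on {0..1} (\<lambda>x. cosh (\<bar>th \<rho> x - th \<rho> y\<bar> - 1/2) / (2 * sinh (1/2)))"
    by (intro continuous_intros th_cont) auto
  then show ?thesis using Kf_th[OF _ y] by (metis (no_types, lifting) continuous_on_cong)
qed

lemma G_bounded: "\<exists>M. \<forall>x\<in>{0..1}. \<bar>Gop \<mu> \<rho> \<sigma> x\<bar> \<le> M"
  by (rule cont_bounded01[OF G_cont])

lemma h_int: "integrable M01 (hf \<mu> \<rho> \<sigma>)"
proof -
  have "integrable M01 (\<lambda>y. (Gop \<mu> \<rho> \<sigma> y)^2 * (\<rho> y)^2)"
    by (intro cont_int_mult ir2 continuous_intros G_cont)
  moreover have "integrable M01 (\<lambda>y. 2 * (\<sigma> y)^2)" using Ls by (simp add: L2_def)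
  ultimately show ?thesis unfolding hf_def by (simp add: mult.commute)
qed

lemma h_meas: "hf \<mu> \<rho> \<sigma> \<in> borel_measurable M01" using h_int by (rule borel_measurable_integrable)

lemma Kh_int: "x \<in> {0..1} \<Longrightarrow> integrable M01 (\<lambda>y. Kf \<rho> x y * hf \<mu> \<rho> \<sigma> y)"
proof -
  assume x: "x \<in> {0..1}"
  have "continuous_on {0..1} (\<lambda>y. Kf \<rho> y x)" by (rule Kf_cont[OF x])
  moreover have "Kf \<rho> x y = Kf \<rho> y x" for y unfolding Kf_def by (simp add: min.commute max.commute)
  ultimately have "continuous_on {0..1} (\<lambda>y. Kf \<rho> x y)" by simp
  then show ?thesis by (intro cont_int_mult h_int)
qed

lemma F_bound: "x \<in> {0..1} \<Longrightarrow> \<bar>Fop \<mu> \<rho> \<sigma> x\<bar> \<le> Kmax * integral\<^sup>L M01 (\<lambda>y. \<bar>hf \<mu> \<rho> \<sigma> y\<bar>)"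
proof -
  assume x: "x \<in> {0..1}"
  have "\<bar>Fop \<mu> \<rho> \<sigma> x\<bar> \<le> integral\<^sup>L M01 (\<lambda>y. Kmax * \<bar>hf \<mu> \<rho> \<sigma> y\<bar>)"
    unfolding Fop_Kf
  proof (rule integral_abs_bound_integral)
    show "integrable M01 (\<lambda>y. Kf \<rho> x y * hf \<mu> \<rho> \<sigma> y)" by (rule Kh_int[OF x])
    show "integrable M01 (\<lambda>y. Kmax * \<bar>hf \<mu> \<rho> \<sigma> y\<bar>)" using h_int by simp
    fix y assume "y \<in> space M01"
    then have y: "y \<in> {0..1}" by simp
    show "\<bar>Kf \<rho> x y * hf \<mu> \<rho> \<sigma> y\<bar> \<le> Kmax * \<bar>hf \<mu> \<rho> \<sigma> y\<bar>"
      using Kf_bound[OF x y] by (simp add: abs_mult mult_right_mono)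
  qed
  then show ?thesis by simp
qed

lemma F_cont: "continuous_on {0..1} (Fop \<mu> \<rho> \<sigma>)"
proof (rule continuous_on_sequentiallyI)
  fix u :: "nat \<Rightarrow> real" and a assume u: "\<forall>n. u n \<in> {0..1}" and a: "a \<in> {0..1}" and lim: "u \<longlonglongrightarrow> a"
  show "(\<lambda>n. Fop \<mu> \<rho> \<sigma> (u n)) \<longlonglongrightarrow> Fop \<mu> \<rho> \<sigma> a"
    unfolding Fop_Kf
  proof (rule integral_dominated_convergence[where w="\<lambda>y. Kmax * \<bar>hf \<mu> \<rho> \<sigma> y\<bar>"])
    show "(\<lambda>y. Kf \<rho> a y * hf \<mu> \<rho> \<sigma> y) \<in> borel_measurable M01"
      using Kh_int[OF a] by (rule borel_measurable_integrable)
    show "\<And>n. (\<lambda>y. Kf \<rho> (u n) y * hf \<mu> \<rho> \<sigma> y) \<in> borel_measurable M01"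
      using Kh_int u by (auto intro: borel_measurable_integrable)
    show "integrable M01 (\<lambda>y. Kmax * \<bar>hf \<mu> \<rho> \<sigma> y\<bar>)" using h_int by simp
    show "AE y in M01. (\<lambda>n. Kf \<rho> (u n) y * hf \<mu> \<rho> \<sigma> y) \<longlonglongrightarrow> Kf \<rho> a y * hf \<mu> \<rho> \<sigma> y"
    proof (rule AE_I2)
      fix y assume "y \<in> space M01"
      then have y: "y \<in> {0..1}" by simp
      have "(\<lambda>n. Kf \<rho> (u n) y) \<longlonglongrightarrow> Kf \<rho> a y"
        using Kf_cont[OF y] a u lim unfolding continuous_on_sequentially comp_def by blast
      then show "(\<lambda>n. Kf \<rho> (u n) y * hf \<mu> \<rho> \<sigma> y) \<longlonglongrightarrow> Kf \<rho> a y * hf \<mu> \<rho> \<sigma> y"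
        by (intro tendsto_intros)
    qed
    show "\<And>n. AE y in M01. norm (Kf \<rho> (u n) y * hf \<mu> \<rho> \<sigma> y) \<le> Kmax * \<bar>hf \<mu> \<rho> \<sigma> y\<bar>"
    proof (rule AE_I2)
      fix n y assume "y \<in> space M01"
      then have y: "y \<in> {0..1}" by simp
      show "norm (Kf \<rho> (u n) y * hf \<mu> \<rho> \<sigma> y) \<le> Kmax * \<bar>hf \<mu> \<rho> \<sigma> y\<bar>"
        using Kf_bound[OF _ y, of "u n"] u by (simp add: abs_mult mult_right_mono)
    qed
  qed
qed

lemma f_L2: "L2 (fop \<mu> \<rho> \<sigma>)"
proof -
  have c: "continuous_on {0..1} (\<lambda>x. 1/2 * ((Gop \<mu> \<rho> \<sigma> x)^2 - Fop \<mu> \<rho> \<sigma> x))"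
    by (intro continuous_intros G_cont F_cont)
  obtain M where M: "\<forall>x\<in>{0..1}. \<bar>1/2 * ((Gop \<mu> \<rho> \<sigma> x)^2 - Fop \<mu> \<rho> \<sigma> x)\<bar> \<le> M"
    using cont_bounded01[OF c] by blast
  have "L2 (\<lambda>x. 1/2 * ((Gop \<mu> \<rho> \<sigma> x)^2 - Fop \<mu> \<rho> \<sigma> x) * \<rho> x)"
    using M by (intro L2_bmult[OF Lr cont_meas_M01[OF c]]) auto
  then show ?thesis unfolding fop_def[abs_def] by (simp add: mult_ac)
qed

end


lemma sqrt_tendsto0:
  assumes "((\<lambda>s. sqrt (X s)) \<longlongrightarrow> 0) F" "\<And>s. 0 \<le> X s"
  shows "(X \<longlongrightarrow> 0) F"
proof -
  have "((\<lambda>s. (sqrt (X s))^2) \<longlongrightarrow> 0^2) F" by (intro tendsto_intros assms)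
  then show ?thesis using assms(2) by simp
qed

lemma L2D_l2lim:
  assumes "has_L2_derivative u v t I" "L2 v" "eventually (\<lambda>s. L2 (u s)) (at t within I)" "L2 (u t)"
  shows "l2lim (at t within I) (Q t u) v"
proof -
  have "((\<lambda>s. sqrt (integral\<^sup>L M01 (\<lambda>x. (Q t u s x - v x)^2))) \<longlongrightarrow> 0) (at t within I)"
    using assms(1) unfolding has_L2_derivative_def l2dist01_def lint_M01 Q_def .
  then have "((\<lambda>s. integral\<^sup>L M01 (\<lambda>x. (Q t u s x - v x)^2)) \<longlongrightarrow> 0) (at t within I)"
    by (rule sqrt_tendsto0) simp
  moreover have "eventually (\<lambda>s. L2 (Q t u s)) (at t within I)"
    using assms(3) by (rule eventually_mono) (use assms(4) in \<open>auto simp: Q_def[abs_def]\<close>)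
  ultimately show ?thesis using assms(2) unfolding l2lim_def by blast
qed

lemma l1_ulim_mult:
  assumes "l1lim F w w'" "ulim F g g'"
  shows "l1lim F (\<lambda>s x. w s x * g s x) (\<lambda>x. w' x * g' x)"
  using ulim_l1_mult[OF assms(2,1)] by (simp add: mult.commute)

locale dyn =
  fixes \<mu> :: real and I :: "real set" and \<rho> \<sigma> :: "real \<Rightarrow> real \<Rightarrow> real" and t :: real
  assumes sq: "\<And>s. s \<in> I \<Longrightarrow> sqint01 (\<rho> s) \<and> sqint01 (\<sigma> s)"
    and d1: "has_L2_derivative \<rho> (\<sigma> t) t I"
    and d2: "has_L2_derivative \<sigma> (fop \<mu> (\<rho> t) (\<sigma> t)) t I"
    and nrm: "\<And>s. s \<in> I \<Longrightarrow> (LINT x:{0..1}|lborel. (\<rho> s x)^2) = 1"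
    and tI: "t \<in> I"
begin

abbreviation "F \<equiv> at t within I"

lemma evI: "eventually (\<lambda>s. s \<in> I) F"
  unfolding eventually_at_filter by simp

lemma ne: "eventually (\<lambda>s. s \<noteq> t) F"
  unfolding eventually_at_filter by simp

lemma st: "((\<lambda>s. s) \<longlongrightarrow> t) F" by simp

lemma Lr: "s \<in> I \<Longrightarrow> L2 (\<rho> s)" using sq by (simp add: L2_sqint01)
lemma Ls: "s \<in> I \<Longrightarrow> L2 (\<sigma> s)" using sq by (simp add: L2_sqint01)

lemma norm1: "s \<in> I \<Longrightarrow> integral\<^sup>L M01 (\<lambda>x. (\<rho> s x)^2) = 1"
  using nrm by (simp add: lint_M01)

sublocale T: stat "\<rho> t" "\<sigma> t" \<mu>
  by unfold_locales (use Lr Ls norm1 tI in auto)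

abbreviation "ff \<equiv> fop \<mu> (\<rho> t) (\<sigma> t)"

lemma evLr: "eventually (\<lambda>s. L2 (\<rho> s)) F" using evI by (rule eventually_mono) (rule Lr)
lemma evLs: "eventually (\<lambda>s. L2 (\<sigma> s)) F" using evI by (rule eventually_mono) (rule Ls)

lemma Qr: "l2lim F (Q t \<rho>) (\<sigma> t)"
  by (rule L2D_l2lim[OF d1 Ls[OF tI] evLr Lr[OF tI]])

lemma Qs: "l2lim F (Q t \<sigma>) ff"
  by (rule L2D_l2lim[OF d2 T.f_L2 evLs Ls[OF tI]])

lemma Cr: "l2lim F \<rho> (\<rho> t)"
  by (rule l2_deriv_cont[OF Qr Lr[OF tI] ne st])

lemma Cs: "l2lim F \<sigma> (\<sigma> t)"
  by (rule l2_deriv_cont[OF Qs Ls[OF tI] ne st])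

lemma QP: "l1lim F (Q t (\<lambda>s x. \<rho> s x * \<sigma> s x)) (\<lambda>x. \<sigma> t x * \<sigma> t x + \<rho> t x * ff x)"
  unfolding Q_mult
  by (rule l1_add[OF l2_prod_l1[OF Qr Cs] l2_prod_l1[OF l2lim_const[OF Lr[OF tI]] Qs]])

lemma QR: "l1lim F (Q t (\<lambda>s x. \<rho> s x * \<rho> s x)) (\<lambda>x. \<sigma> t x * \<rho> t x + \<rho> t x * \<sigma> t x)"
  unfolding Q_mult
  by (rule l1_add[OF l2_prod_l1[OF Qr Cr] l2_prod_l1[OF l2lim_const[OF Lr[OF tI]] Qr]])

lemma QS: "l1lim F (Q t (\<lambda>s x. \<sigma> s x * \<sigma> s x)) (\<lambda>x. ff x * \<sigma> t x + \<sigma> t x * ff x)"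
  unfolding Q_mult
  by (rule l1_add[OF l2_prod_l1[OF Qs Cs] l2_prod_l1[OF l2lim_const[OF Ls[OF tI]] Qs]])

lemma CR: "l1lim F (\<lambda>s x. \<rho> s x * \<rho> s x) (\<lambda>x. \<rho> t x * \<rho> t x)"
  by (rule l2_prod_l1[OF Cr Cr])

end


context dyn
begin

definition "AA s = Af (\<rho> s) (\<sigma> s)"
definition "A1 x = (LINT y:{0..x}|lborel. 2 * (\<sigma> t y * \<sigma> t y + \<rho> t y * ff y))"
definition "cc s = integral\<^sup>L M01 (\<lambda>y. AA s y * (\<rho> s y)^2)"
definition "c1 = integral\<^sup>L M01 (\<lambda>y. A1 y * (\<rho> t y * \<rho> t y) + AA t y * (\<sigma> t y * \<rho> t y + \<rho> t y * \<sigma> t y))"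
definition "GG s x = Gop \<mu> (\<rho> s) (\<sigma> s) x"
definition "G1 x = A1 x - c1"

lemma irs: "s \<in> I \<Longrightarrow> integrable M01 (\<lambda>y. 2 * \<rho> s y * \<sigma> s y)"
  using L2_prod[OF Lr Ls] by (simp add: mult.assoc)

lemma QA_eq:
  assumes s: "s \<in> I" and x: "x \<in> {0..1}"
  shows "Q t AA s x = (LINT y:{0..x}|lborel. 2 * Q t (\<lambda>s x. \<rho> s x * \<sigma> s x) s y)"
proof -
  have "Q t AA s x = (LINT y:{0..x}|lborel. 2 * \<rho> s y * \<sigma> s y - 2 * \<rho> t y * \<sigma> t y) / (s - t)"
    unfolding Q_def AA_def Af_def using x by (subst si_diff[OF irs[OF s] irs[OF tI]]) auto
  also have "\<dots> = (LINT y:{0..x}|lborel. (2 * \<rho> s y * \<sigma> s y - 2 * \<rho> t y * \<sigma> t y) / (s - t))"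
    by simp
  also have "\<dots> = (LINT y:{0..x}|lborel. 2 * Q t (\<lambda>s x. \<rho> s x * \<sigma> s x) s y)"
    unfolding Q_def by (rule set_lebesgue_integral_cong) (auto simp: field_simps)
  finally show ?thesis .
qed

lemma QA: "ulim F (Q t AA) A1"
proof (rule ulim_cong[OF l1_si_ulim[OF l1_cmult[OF QP, of 2]]])
  show "eventually (\<lambda>s. \<forall>x\<in>{0..1}. (LINT y:{0..x}|lborel. 2 * Q t (\<lambda>s x. \<rho> s x * \<sigma> s x) s y) = Q t AA s x) F"
    using evI by (rule eventually_mono) (auto simp: QA_eq)
  show "\<forall>x\<in>{0..1}. (LINT y:{0..x}|lborel. 2 * (\<sigma> t y * \<sigma> t y + \<rho> t y * ff y)) = A1 x"
    by (simp add: A1_def)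
qed

lemma CA: "ulim F AA (AA t)"
  by (rule ulim_deriv_cont[OF QA _ ne st]) (simp add: AA_def T.Af_cont)

lemma AA_cont: "s \<in> I \<Longrightarrow> continuous_on {0..1} (AA s)"
  unfolding AA_def Af_def using si_cont[OF irs] by simp

lemma Qc: "((\<lambda>s. (cc s - cc t) / (s - t)) \<longlongrightarrow> c1) F"
proof -
  have L: "l1lim F (\<lambda>s x. Q t AA s x * (\<rho> s x * \<rho> s x) + AA t x * Q t (\<lambda>s x. \<rho> s x * \<rho> s x) s x)
     (\<lambda>x. A1 x * (\<rho> t x * \<rho> t x) + AA t x * (\<sigma> t x * \<rho> t x + \<rho> t x * \<sigma> t x))"
    by (rule l1_add[OF ulim_l1_mult[OF QA CR] ulim_l1_mult[OF ulim_const QR]]) (simp add: AA_def T.Af_cont)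
  have "((\<lambda>s. integral\<^sup>L M01 (\<lambda>x. Q t AA s x * (\<rho> s x * \<rho> s x) + AA t x * Q t (\<lambda>s x. \<rho> s x * \<rho> s x) s x)) \<longlongrightarrow> c1) F"
    using l1_int[OF L] unfolding c1_def .
  moreover have "eventually (\<lambda>s. integral\<^sup>L M01 (\<lambda>x. Q t AA s x * (\<rho> s x * \<rho> s x) + AA t x * Q t (\<lambda>s x. \<rho> s x * \<rho> s x) s x)
     = (cc s - cc t) / (s - t)) F"
    using evI
  proof (rule eventually_mono)
    fix s assume s: "s \<in> I"
    have i: "integrable M01 (\<lambda>y. AA r y * (\<rho> r y)^2)" if "r \<in> I" for r
      using that by (intro cont_int_mult AA_cont L2_sq_int Lr)
    have "(cc s - cc t) / (s - t) = integral\<^sup>L M01 (\<lambda>y. (AA s y * (\<rho> s y)^2 - AA t y * (\<rho> t y)^2) / (s - t))"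
      unfolding cc_def using i[OF s] i[OF tI] by simp
    also have "\<dots> = integral\<^sup>L M01 (\<lambda>x. Q t AA s x * (\<rho> s x * \<rho> s x) + AA t x * Q t (\<lambda>s x. \<rho> s x * \<rho> s x) s x)"
    proof (rule Bochner_Integration.integral_cong[OF refl])
      fix x
      show "(AA s x * (\<rho> s x)^2 - AA t x * (\<rho> t x)^2) / (s - t) = Q t AA s x * (\<rho> s x * \<rho> s x) + AA t x * Q t (\<lambda>s x. \<rho> s x * \<rho> s x) s x"
        using Q_mult[of t AA "\<lambda>s x. \<rho> s x * \<rho> s x" s x] by (simp add: Q_def power2_eq_square)
    qed
    finally show "integral\<^sup>L M01 (\<lambda>x. Q t AA s x * (\<rho> s x * \<rho> s x) + AA t x * Q t (\<lambda>s x. \<rho> s x * \<rho> s x) s x)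
     = (cc s - cc t) / (s - t)" by simp
  qed
  ultimately show ?thesis by (rule Lim_transform_eventually)
qed

lemma GG_eq: "GG s x = AA s x + \<mu> - cc s"
  unfolding GG_def Gop_Af AA_def cc_def ..

lemma QG: "ulim F (Q t GG) G1"
proof -
  have "Q t GG = (\<lambda>s x. Q t AA s x - (cc s - cc t) / (s - t))"
    by (intro ext) (simp add: Q_def GG_eq diff_divide_distrib[symmetric])
  then show ?thesis using ulim_diff[OF QA ulim_cfun[OF Qc]] unfolding G1_def[abs_def] by simp
qed

lemma CG: "ulim F GG (GG t)"
  by (rule ulim_deriv_cont[OF QG _ ne st]) (simp add: GG_def[abs_def] T.G_cont)

lemma QGG: "ulim F (Q t (\<lambda>s x. GG s x * GG s x)) (\<lambda>x. G1 x * GG t x + GG t x * G1 x)"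
  unfolding Q_mult
  by (rule ulim_add[OF ulim_mult[OF QG CG] ulim_mult[OF ulim_const QG]]) (simp add: GG_def[abs_def] T.G_cont)

lemma CGG: "ulim F (\<lambda>s x. GG s x * GG s x) (\<lambda>x. GG t x * GG t x)"
  by (rule ulim_mult[OF CG CG])

definition "EE s = integral\<^sup>L M01 (\<lambda>x. (\<rho> s x)^2 * (GG s x)^2 + 4 * (\<sigma> s x)^2)"

definition "DD = integral\<^sup>L M01 (\<lambda>x. (\<sigma> t x * \<rho> t x + \<rho> t x * \<sigma> t x) * (GG t x * GG t x)
   + \<rho> t x * \<rho> t x * (G1 x * GG t x + GG t x * G1 x) + 4 * (ff x * \<sigma> t x + \<sigma> t x * ff x))"

lemma GG_cont: "s \<in> I \<Longrightarrow> continuous_on {0..1} (GG s)"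
  unfolding GG_eq[abs_def] by (intro continuous_intros AA_cont)

lemma QE: "((\<lambda>s. (EE s - EE t) / (s - t)) \<longlongrightarrow> DD) F"
proof -
  have L: "l1lim F (\<lambda>s x. (Q t (\<lambda>s x. \<rho> s x * \<rho> s x) s x * (GG s x * GG s x) + \<rho> t x * \<rho> t x * Q t (\<lambda>s x. GG s x * GG s x) s x)
      + 4 * Q t (\<lambda>s x. \<sigma> s x * \<sigma> s x) s x)
     (\<lambda>x. (\<sigma> t x * \<rho> t x + \<rho> t x * \<sigma> t x) * (GG t x * GG t x)
   + \<rho> t x * \<rho> t x * (G1 x * GG t x + GG t x * G1 x) + 4 * (ff x * \<sigma> t x + \<sigma> t x * ff x))"
    by (rule l1_add[OF l1_add[OF l1_ulim_mult[OF QR CGG] l1_ulim_mult[OF l1_const QGG]] l1_cmult[OF QS]])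
       (use L2_prod[OF Lr[OF tI] Lr[OF tI]] in simp)
  have "((\<lambda>s. integral\<^sup>L M01 (\<lambda>x. (Q t (\<lambda>s x. \<rho> s x * \<rho> s x) s x * (GG s x * GG s x) + \<rho> t x * \<rho> t x * Q t (\<lambda>s x. GG s x * GG s x) s x)
      + 4 * Q t (\<lambda>s x. \<sigma> s x * \<sigma> s x) s x)) \<longlongrightarrow> DD) F"
    using l1_int[OF L] unfolding DD_def .
  moreover have "eventually (\<lambda>s. integral\<^sup>L M01 (\<lambda>x. (Q t (\<lambda>s x. \<rho> s x * \<rho> s x) s x * (GG s x * GG s x) + \<rho> t x * \<rho> t x * Q t (\<lambda>s x. GG s x * GG s x) s x)
      + 4 * Q t (\<lambda>s x. \<sigma> s x * \<sigma> s x) s x) = (EE s - EE t) / (s - t)) F"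
    using evI
  proof (rule eventually_mono)
    fix s assume s: "s \<in> I"
    have i: "integrable M01 (\<lambda>x. (\<rho> r x)^2 * (GG r x)^2 + 4 * (\<sigma> r x)^2)" if "r \<in> I" for r
    proof -
      have "integrable M01 (\<lambda>x. (GG r x)^2 * (\<rho> r x)^2)"
        using that by (intro cont_int_mult continuous_intros GG_cont L2_sq_int Lr)
      moreover have "integrable M01 (\<lambda>x. 4 * (\<sigma> r x)^2)" using Ls[OF that] by (simp add: L2_def)
      ultimately show ?thesis by (simp add: mult.commute)
    qed
    have "(EE s - EE t) / (s - t) = integral\<^sup>L M01 (\<lambda>x. (((\<rho> s x)^2 * (GG s x)^2 + 4 * (\<sigma> s x)^2) - ((\<rho> t x)^2 * (GG t x)^2 + 4 * (\<sigma> t x)^2)) / (s - t))"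
      unfolding EE_def using i[OF s] i[OF tI] by simp
    also have "\<dots> = integral\<^sup>L M01 (\<lambda>x. (Q t (\<lambda>s x. \<rho> s x * \<rho> s x) s x * (GG s x * GG s x) + \<rho> t x * \<rho> t x * Q t (\<lambda>s x. GG s x * GG s x) s x)
      + 4 * Q t (\<lambda>s x. \<sigma> s x * \<sigma> s x) s x)"
    proof (rule Bochner_Integration.integral_cong[OF refl])
      fix x
      show "(((\<rho> s x)^2 * (GG s x)^2 + 4 * (\<sigma> s x)^2) - ((\<rho> t x)^2 * (GG t x)^2 + 4 * (\<sigma> t x)^2)) / (s - t) =
         (Q t (\<lambda>s x. \<rho> s x * \<rho> s x) s x * (GG s x * GG s x) + \<rho> t x * \<rho> t x * Q t (\<lambda>s x. GG s x * GG s x) s x)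
      + 4 * Q t (\<lambda>s x. \<sigma> s x * \<sigma> s x) s x"
        using Q_mult[of t "\<lambda>s x. \<rho> s x * \<rho> s x" "\<lambda>s x. GG s x * GG s x" s x]
        by (simp add: Q_def power2_eq_square add_divide_distrib diff_divide_distrib algebra_simps)
    qed
    finally show "integral\<^sup>L M01 (\<lambda>x. (Q t (\<lambda>s x. \<rho> s x * \<rho> s x) s x * (GG s x * GG s x) + \<rho> t x * \<rho> t x * Q t (\<lambda>s x. GG s x * GG s x) s x)
      + 4 * Q t (\<lambda>s x. \<sigma> s x * \<sigma> s x) s x) = (EE s - EE t) / (s - t)" by simp
  qed
  ultimately show ?thesis by (rule Lim_transform_eventually)
qed

lemma E_deriv: "(EE has_real_derivative DD) F"
  unfolding has_field_derivative_iff by (rule QE)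

end


definition ac :: "(real \<Rightarrow> real) \<Rightarrow> (real \<Rightarrow> real) \<Rightarrow> bool" where
  "ac u u' \<longleftrightarrow> integrable M01 u' \<and> (\<forall>x\<in>{0..1}. u x = u 0 + (LINT y:{0..x}|lborel. u' y))"

lemma si_00: fixes g :: "real \<Rightarrow> real" shows "integrable M01 g \<Longrightarrow> (LINT y:{0}|lborel. g y) = 0"
  using si_hk(2)[of g 0 0] by simp

lemma ac_int: "integrable M01 g \<Longrightarrow> ac (\<lambda>x. c + (LINT y:{0..x}|lborel. g y)) g"
  unfolding ac_def using si_00[of g] by auto

lemma ac_deriv_int: "ac u u' \<Longrightarrow> integrable M01 u'" by (simp add: ac_def)

lemma ac_eq: "ac u u' \<Longrightarrow> x \<in> {0..1} \<Longrightarrow> u x = u 0 + (LINT y:{0..x}|lborel. u' y)"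
  unfolding ac_def by blast

lemma ac_cont: assumes "ac u u'" shows "continuous_on {0..1} u"
proof -
  have "continuous_on {0..1} (\<lambda>x. u 0 + (LINT y:{0..x}|lborel. u' y))"
    using ac_deriv_int[OF assms] by (intro continuous_intros si_cont)
  then show ?thesis
  proof (rule continuous_on_eq)
    fix x :: real assume "x \<in> {0..1}"
    then show "u 0 + (LINT y:{0..x}|lborel. u' y) = u x" using ac_eq[OF assms, of x] by simp
  qed
qed

lemma ac_meas: "ac u u' \<Longrightarrow> u \<in> borel_measurable M01"
  by (rule cont_meas_M01[OF ac_cont])

lemma ac_ftc:
  assumes "ac u u'" "0 \<le> a" "a \<le> b" "b \<le> 1"
  shows "(LINT y:{a..b}|lborel. u' y) = u b - u a"
proof -
  have i: "integrable M01 u'" using assms(1) by (simp add: ac_def)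
  have "integral {0..a} u' + integral {a..b} u' = integral {0..b} u'"
    using Henstock_Kurzweil_Integration.integral_combine[of 0 a b u'] si_hk(1)[OF i, of 0 b] assms by auto
  moreover have "u a = u 0 + integral {0..a} u'" "u b = u 0 + integral {0..b} u'"
    using assms si_hk(2)[OF i, of 0 a] si_hk(2)[OF i, of 0 b] ac_eq[OF assms(1), of a] ac_eq[OF assms(1), of b] by auto
  moreover have "(LINT y:{a..b}|lborel. u' y) = integral {a..b} u'" using si_hk(2)[OF i, of a b] assms by linarith
  ultimately show ?thesis by simp
qed

lemma ac_cong:
  assumes "ac u u'" "\<forall>x\<in>{0..1}. u x = v x" "\<forall>x\<in>{0..1}. u' x = v' x"
  shows "ac v v'"
proof -
  have i: "integrable M01 v'"
  proof -
    have "integrable M01 u' \<longleftrightarrow> integrable M01 v'"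
      by (rule Bochner_Integration.integrable_cong) (use assms(3) in simp_all)
    then show ?thesis using assms(1) by (simp add: ac_def)
  qed
  have "v x = v 0 + (LINT y:{0..x}|lborel. v' y)" if x: "x \<in> {0..1}" for x
  proof -
    have "(LINT y:{0..x}|lborel. v' y) = (LINT y:{0..x}|lborel. u' y)"
      using x assms(3) by (intro set_lebesgue_integral_cong) auto
    moreover have "u x = u 0 + (LINT y:{0..x}|lborel. u' y)" using ac_eq[OF assms(1) x] .
    moreover have "u 0 = v 0" "u x = v x" using assms(2) x by auto
    ultimately show ?thesis by simp
  qed
  with i show ?thesis unfolding ac_def by blast
qed

lemma ac_const: "ac (\<lambda>x. c) (\<lambda>x. 0)"
  unfolding ac_def by simp

lemma ac_add: assumes "ac u u'" "ac v v'" shows "ac (\<lambda>x. u x + v x) (\<lambda>x. u' x + v' x)"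
proof -
  have iu: "integrable M01 u'" and iv: "integrable M01 v'" using assms by (auto simp: ac_def)
  have H: "u x + v x = (u 0 + v 0) + (LINT y:{0..x}|lborel. u' y + v' y)" if x: "x \<in> {0..1}" for x
  proof -
    have "(LINT y:{0..x}|lborel. u' y + v' y) = (LINT y:{0..x}|lborel. u' y) + (LINT y:{0..x}|lborel. v' y)"
      using x by (intro si_add[OF iu iv]) auto
    moreover have "u x = u 0 + (LINT y:{0..x}|lborel. u' y)" "v x = v 0 + (LINT y:{0..x}|lborel. v' y)"
      using ac_eq[OF assms(1) x] ac_eq[OF assms(2) x] by auto
    ultimately show ?thesis by simp
  qed
  show ?thesis unfolding ac_def
  proof (intro conjI ballI)
    show "integrable M01 (\<lambda>x. u' x + v' x)" using iu iv by simp
    fix x :: real assume x: "x \<in> {0..1}"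
    show "u x + v x = (u 0 + v 0) + (LINT y:{0..x}|lborel. u' y + v' y)" by (rule H[OF x])
  qed
qed

lemma ac_cmult: assumes "ac u u'" shows "ac (\<lambda>x. c * u x) (\<lambda>x. c * u' x)"
proof -
  have iu: "integrable M01 u'" using assms by (auto simp: ac_def)
  have H: "c * u x = c * u 0 + (LINT y:{0..x}|lborel. c * u' y)" if x: "x \<in> {0..1}" for x
  proof -
    have "u x = u 0 + (LINT y:{0..x}|lborel. u' y)" using ac_eq[OF assms x] .
    then show ?thesis by (simp add: distrib_left)
  qed
  show ?thesis unfolding ac_def
  proof (intro conjI ballI)
    show "integrable M01 (\<lambda>x. c * u' x)" using iu by simp
    fix x :: real assume x: "x \<in> {0..1}"
    show "c * u x = c * u 0 + (LINT y:{0..x}|lborel. c * u' y)" by (rule H[OF x])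
  qed
qed

lemma ac_diff: assumes "ac u u'" "ac v v'" shows "ac (\<lambda>x. u x - v x) (\<lambda>x. u' x - v' x)"
  using ac_add[OF assms(1) ac_cmult[OF assms(2), of "-1"]] by simp


interpretation P01: pair_sigma_finite M01 M01
  by (rule pair_sigma_finite.intro) (simp_all add: M01.sigma_finite_measure_axioms)

lemma fub:
  fixes k :: "real \<Rightarrow> real \<Rightarrow> real"
  assumes km: "case_prod k \<in> borel_measurable (M01 \<Otimes>\<^sub>M M01)"
    and ia: "integrable M01 a" and ib: "integrable M01 b"
    and bd: "\<And>x y. x \<in> {0..1} \<Longrightarrow> y \<in> {0..1} \<Longrightarrow> \<bar>k x y\<bar> \<le> \<bar>a x\<bar> * \<bar>b y\<bar>"
  shows "integral\<^sup>L M01 (\<lambda>y. integral\<^sup>L M01 (\<lambda>x. k x y)) = integral\<^sup>L M01 (\<lambda>x. integral\<^sup>L M01 (\<lambda>y. k x y))"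
    and "integrable M01 (\<lambda>y. integral\<^sup>L M01 (\<lambda>x. k x y))"
    and "integrable M01 (\<lambda>x. integral\<^sup>L M01 (\<lambda>y. k x y))"
proof -
  have iy: "integrable M01 (\<lambda>y. k x y)" if x: "x \<in> {0..1}" for x
  proof (rule Bochner_Integration.integrable_bound)
    show "integrable M01 (\<lambda>y. \<bar>a x\<bar> * \<bar>b y\<bar>)" using ib by simp
    show "(\<lambda>y. k x y) \<in> borel_measurable M01" using measurable_Pair2[OF km, of x] x by simp
    show "AE y in M01. norm (k x y) \<le> norm (\<bar>a x\<bar> * \<bar>b y\<bar>)"
      by (rule AE_I2) (use bd x in auto)
  qed
  have I: "integrable (M01 \<Otimes>\<^sub>M M01) (case_prod k)"
  proof (rule P01.Fubini_integrable)
    show "case_prod k \<in> borel_measurable (M01 \<Otimes>\<^sub>M M01)" by (rule km)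
    show "integrable M01 (\<lambda>x. \<integral>y. norm (case_prod k (x, y)) \<partial>M01)"
    proof (rule Bochner_Integration.integrable_bound)
      show "integrable M01 (\<lambda>x. \<bar>a x\<bar> * integral\<^sup>L M01 (\<lambda>y. \<bar>b y\<bar>))" using ia by simp
      show "(\<lambda>x. \<integral>y. norm (case_prod k (x, y)) \<partial>M01) \<in> borel_measurable M01"
        using km by measurable
      show "AE x in M01. norm (\<integral>y. norm (case_prod k (x, y)) \<partial>M01) \<le> norm (\<bar>a x\<bar> * integral\<^sup>L M01 (\<lambda>y. \<bar>b y\<bar>))"
      proof (rule AE_I2)
        fix x assume "x \<in> space M01"
        then have x: "x \<in> {0..1}" by simp
        have "(\<integral>y. norm (k x y) \<partial>M01) \<le> integral\<^sup>L M01 (\<lambda>y. \<bar>a x\<bar> * \<bar>b y\<bar>)"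
          using iy[OF x] ib bd x by (intro integral_mono) auto
        moreover have "0 \<le> (\<integral>y. norm (k x y) \<partial>M01)" by simp
        ultimately show "norm (\<integral>y. norm (case_prod k (x, y)) \<partial>M01) \<le> norm (\<bar>a x\<bar> * integral\<^sup>L M01 (\<lambda>y. \<bar>b y\<bar>))"
          by simp
      qed
    qed
    show "AE x in M01. integrable M01 (\<lambda>y. case_prod k (x, y))"
      by (rule AE_I2) (use iy in simp)
  qed
  then show "integral\<^sup>L M01 (\<lambda>y. integral\<^sup>L M01 (\<lambda>x. k x y)) = integral\<^sup>L M01 (\<lambda>x. integral\<^sup>L M01 (\<lambda>y. k x y))"
    by (rule P01.Fubini_integral)
  show "integrable M01 (\<lambda>y. integral\<^sup>L M01 (\<lambda>x. k x y))" by (rule P01.integrable_snd[OF I])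
  show "integrable M01 (\<lambda>x. integral\<^sup>L M01 (\<lambda>y. k x y))" by (rule P01.integrable_fst[OF I])
qed


lemma id_M01[measurable]: "(\<lambda>x::real. x) \<in> borel_measurable M01"
  by (rule cont_meas_M01) (rule continuous_on_id)

lemma fst_M01[measurable]: "(\<lambda>p::real\<times>real. fst p) \<in> borel_measurable (M01 \<Otimes>\<^sub>M M01)"
  by (rule measurable_compose[OF measurable_fst id_M01])

lemma snd_M01[measurable]: "(\<lambda>p::real\<times>real. snd p) \<in> borel_measurable (M01 \<Otimes>\<^sub>M M01)"
  by (rule measurable_compose[OF measurable_snd id_M01])

lemma ind_meas1: "(\<lambda>p. indicator {0..fst p} (snd p) :: real) \<in> borel_measurable (M01 \<Otimes>\<^sub>M M01)"
proof -
  have eq: "(\<lambda>p. indicator {0..fst p} (snd p) :: real) = (\<lambda>p. of_bool (0 \<le> snd p \<and> snd p \<le> fst p))"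
    by (auto simp: indicator_def)
  have "(\<lambda>p. of_bool (0 \<le> snd p \<and> snd p \<le> fst p) :: real) \<in> borel_measurable (M01 \<Otimes>\<^sub>M M01)"
    by measurable
  then show ?thesis unfolding eq .
qed

lemma ind_meas2: "(\<lambda>p. indicator {a..b} (fst p) :: real) \<in> borel_measurable (M01 \<Otimes>\<^sub>M M01)"
  by measurable

lemma ind_meas3: "(\<lambda>p. indicator {a..b} (snd p) :: real) \<in> borel_measurable (M01 \<Otimes>\<^sub>M M01)"
  by measurable


lemma ind_meas1': "(\<lambda>p. indicator {0..snd p} (fst p) :: real) \<in> borel_measurable (M01 \<Otimes>\<^sub>M M01)"
proof -
  have eq: "(\<lambda>p. indicator {0..snd p} (fst p) :: real) = (\<lambda>p. of_bool (0 \<le> fst p \<and> fst p \<le> snd p))"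
    by (auto simp: indicator_def)
  have "(\<lambda>p. of_bool (0 \<le> fst p \<and> fst p \<le> snd p) :: real) \<in> borel_measurable (M01 \<Otimes>\<^sub>M M01)"
    by measurable
  then show ?thesis unfolding eq .
qed

lemma si_M01: fixes g :: "real \<Rightarrow> real" shows "x \<in> {0..1} \<Longrightarrow> (LINT y:{0..x}|lborel. g y) = integral\<^sup>L M01 (\<lambda>y. indicator {0..x} y * g y)"
  by (rule sub_int_M01) auto

lemma int_point:
  fixes g :: "real \<Rightarrow> real"
  assumes "integrable M01 g" "s \<in> {0..1}"
  shows "integral\<^sup>L M01 (\<lambda>r. indicator {s..s} r * g r) = 0"
proof -
  have "integral\<^sup>L M01 (\<lambda>r. indicator {s..s} r * g r) = (LINT y:{s..s}|lborel. g y)"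
    using assms by (intro sub_int_M01[symmetric]) auto
  also have "\<dots> = integral {s..s} g" using si_hk(2)[OF assms(1), of s s] assms by auto
  finally show ?thesis by simp
qed

lemma int_ind: "integrable M01 g \<Longrightarrow> integrable M01 (\<lambda>y. indicator {a..b} y * g y)"
  for g :: "real \<Rightarrow> real"
proof -
  assume i: "integrable M01 g"
  then have [measurable]: "g \<in> borel_measurable M01" by auto
  show ?thesis
  proof (rule Bochner_Integration.integrable_bound[OF i])
    show "(\<lambda>y. indicator {a..b} y * g y) \<in> borel_measurable M01" by measurable
    show "AE x in M01. norm (indicator {a..b} x * g x) \<le> norm (g x)"
      by (rule AE_I2) (auto simp: indicator_def)
  qed
qed

lemma ac_mult:
  assumes U: "ac u u'" and V: "ac v v'"
  shows "ac (\<lambda>x. u x * v x) (\<lambda>x. u' x * v x + u x * v' x)"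
proof -
  have iu: "integrable M01 u'" and iv: "integrable M01 v'" using U V by (auto simp: ac_def)
  have cu: "continuous_on {0..1} u" and cv: "continuous_on {0..1} v" using U V by (auto intro: ac_cont)
  have mu[measurable]: "u' \<in> borel_measurable M01" and mv[measurable]: "v' \<in> borel_measurable M01"
    using iu iv by auto
  have i1: "integrable M01 (\<lambda>x. u' x * v x)" using cont_int_mult[OF cv iu] by (simp add: mult.commute)
  have i2: "integrable M01 (\<lambda>x. u x * v' x)" using cont_int_mult[OF cu iv] .
  have main: "u x * v x = u 0 * v 0 + (LINT y:{0..x}|lborel. u' y * v y + u y * v' y)" if x: "x \<in> {0..1}" for x
  proof -
    define ix where "ix y = (indicator {0..x} y :: real)" for y
    define Uu where "Uu = integral\<^sup>L M01 (\<lambda>y. ix y * u' y)"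
    define Vv where "Vv = integral\<^sup>L M01 (\<lambda>y. ix y * v' y)"
    define k1 where "k1 s r = ix s * (indicator {0..s} r * (u' s * v' r))" for s r
    define k2 where "k2 s r = ix r * (indicator {0..r} s * (u' s * v' r))" for s r
    have ux: "u x = u 0 + Uu" using ac_eq[OF U x] si_M01[OF x, of u'] unfolding Uu_def ix_def by simp
    have vx: "v x = v 0 + Vv" using ac_eq[OF V x] si_M01[OF x, of v'] unfolding Vv_def ix_def by simp
    have bd: "\<bar>k s r\<bar> \<le> \<bar>u' s\<bar> * \<bar>v' r\<bar>" if "k = k1 \<or> k = k2" for k s r
      using that unfolding k1_def k2_def ix_def by (auto simp: indicator_def abs_mult)
    have m1: "case_prod k1 \<in> borel_measurable (M01 \<Otimes>\<^sub>M M01)"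
    proof -
      have "(\<lambda>p. ix (fst p) * (indicator {0..fst p} (snd p) * (u' (fst p) * v' (snd p)))) \<in> borel_measurable (M01 \<Otimes>\<^sub>M M01)"
        unfolding ix_def using ind_meas1 by measurable
      then show ?thesis unfolding k1_def by (simp add: case_prod_beta')
    qed
    have m2: "case_prod k2 \<in> borel_measurable (M01 \<Otimes>\<^sub>M M01)"
    proof -
      have "(\<lambda>p. ix (snd p) * (indicator {0..snd p} (fst p) * (u' (fst p) * v' (snd p)))) \<in> borel_measurable (M01 \<Otimes>\<^sub>M M01)"
        unfolding ix_def using ind_meas1' by measurable
      then show ?thesis unfolding k2_def by (simp add: case_prod_beta')
    qed
    note F1 = fub[OF m1 iu iv bd[of k1]]
    note F2 = fub[OF m2 iu iv bd[of k2]]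
    have T1: "integral\<^sup>L M01 (\<lambda>s. ix s * (u' s * v s)) = v 0 * Uu + integral\<^sup>L M01 (\<lambda>s. integral\<^sup>L M01 (\<lambda>r. k1 s r))"
    proof -
      have "integral\<^sup>L M01 (\<lambda>s. ix s * (u' s * v s)) = integral\<^sup>L M01 (\<lambda>s. v 0 * (ix s * u' s) + integral\<^sup>L M01 (\<lambda>r. k1 s r))"
      proof (rule Bochner_Integration.integral_cong[OF refl])
        fix s assume "s \<in> space M01"
        then have s: "s \<in> {0..1}" by simp
        have "v s = v 0 + integral\<^sup>L M01 (\<lambda>r. indicator {0..s} r * v' r)"
          using ac_eq[OF V s] si_M01[OF s, of v'] by simp
        then show "ix s * (u' s * v s) = v 0 * (ix s * u' s) + integral\<^sup>L M01 (\<lambda>r. k1 s r)"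
          unfolding k1_def by (simp add: algebra_simps)
      qed
      also have "\<dots> = v 0 * Uu + integral\<^sup>L M01 (\<lambda>s. integral\<^sup>L M01 (\<lambda>r. k1 s r))"
        unfolding Uu_def using F1(3) int_ind[OF iu] unfolding ix_def by simp
      finally show ?thesis .
    qed
    have T2: "integral\<^sup>L M01 (\<lambda>r. ix r * (u r * v' r)) = u 0 * Vv + integral\<^sup>L M01 (\<lambda>r. integral\<^sup>L M01 (\<lambda>s. k2 s r))"
    proof -
      have "integral\<^sup>L M01 (\<lambda>r. ix r * (u r * v' r)) = integral\<^sup>L M01 (\<lambda>r. u 0 * (ix r * v' r) + integral\<^sup>L M01 (\<lambda>s. k2 s r))"
      proof (rule Bochner_Integration.integral_cong[OF refl])
        fix r assume "r \<in> space M01"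
        then have r: "r \<in> {0..1}" by simp
        have "u r = u 0 + integral\<^sup>L M01 (\<lambda>s. indicator {0..r} s * u' s)"
          using ac_eq[OF U r] si_M01[OF r, of u'] by simp
        moreover have "integral\<^sup>L M01 (\<lambda>s. k2 s r) = (ix r * v' r) * integral\<^sup>L M01 (\<lambda>s. indicator {0..r} s * u' s)"
        proof -
          have "(\<lambda>s. k2 s r) = (\<lambda>s. (ix r * v' r) * (indicator {0..r} s * u' s))" by (auto simp: k2_def)
          then show ?thesis by simp
        qed
        ultimately show "ix r * (u r * v' r) = u 0 * (ix r * v' r) + integral\<^sup>L M01 (\<lambda>s. k2 s r)"
          by (simp add: algebra_simps)
      qed
      also have "\<dots> = u 0 * Vv + integral\<^sup>L M01 (\<lambda>r. integral\<^sup>L M01 (\<lambda>s. k2 s r))"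
        unfolding Vv_def using F2(2) int_ind[OF iv] unfolding ix_def by simp
      finally show ?thesis .
    qed
    have T3: "integral\<^sup>L M01 (\<lambda>s. integral\<^sup>L M01 (\<lambda>r. k1 s r)) + integral\<^sup>L M01 (\<lambda>s. integral\<^sup>L M01 (\<lambda>r. k2 s r)) = Uu * Vv"
    proof -
      have "integral\<^sup>L M01 (\<lambda>s. integral\<^sup>L M01 (\<lambda>r. k1 s r)) + integral\<^sup>L M01 (\<lambda>s. integral\<^sup>L M01 (\<lambda>r. k2 s r))
          = integral\<^sup>L M01 (\<lambda>s. integral\<^sup>L M01 (\<lambda>r. k1 s r) + integral\<^sup>L M01 (\<lambda>r. k2 s r))"
        using F1(3) F2(3) by simp
      also have "\<dots> = integral\<^sup>L M01 (\<lambda>s. (ix s * u' s) * Vv)"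
      proof (rule Bochner_Integration.integral_cong[OF refl])
        fix s assume "s \<in> space M01"
        then have s: "s \<in> {0..1}" by simp
        have e: "k1 s r + k2 s r = (ix s * u' s) * (ix r * v' r) + (ix s * u' s) * (indicator {s..s} r * v' r)"
          if r: "r \<in> space M01" for r
          using r s unfolding k1_def k2_def ix_def by (auto simp: indicator_def)
        have "integral\<^sup>L M01 (\<lambda>r. k1 s r) + integral\<^sup>L M01 (\<lambda>r. k2 s r) = integral\<^sup>L M01 (\<lambda>r. k1 s r + k2 s r)"
        proof -
          have ik: "integrable M01 (\<lambda>r. k s r)" if "k = k1 \<or> k = k2" and mk: "case_prod k \<in> borel_measurable (M01 \<Otimes>\<^sub>M M01)" for k
          proof (rule Bochner_Integration.integrable_bound)
            show "integrable M01 (\<lambda>r. \<bar>u' s\<bar> * \<bar>v' r\<bar>)" using iv by simp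
            show "(\<lambda>r. k s r) \<in> borel_measurable M01" using measurable_Pair2[OF mk, of s] s by simp
            show "AE r in M01. norm (k s r) \<le> norm (\<bar>u' s\<bar> * \<bar>v' r\<bar>)"
              by (rule AE_I2) (use bd[OF that(1)] in auto)
          qed
          have "integrable M01 (\<lambda>r. k1 s r)" by (rule ik[OF _ m1]) simp
          moreover have "integrable M01 (\<lambda>r. k2 s r)" by (rule ik[OF _ m2]) simp
          ultimately show ?thesis by simp
        qed
        also have "\<dots> = integral\<^sup>L M01 (\<lambda>r. (ix s * u' s) * (ix r * v' r) + (ix s * u' s) * (indicator {s..s} r * v' r))"
          using e by (intro Bochner_Integration.integral_cong) auto
        also have "\<dots> = (ix s * u' s) * Vv + (ix s * u' s) * integral\<^sup>L M01 (\<lambda>r. indicator {s..s} r * v' r)"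
          unfolding Vv_def ix_def using int_ind[OF iv, of 0 x] int_ind[OF iv, of s s]
          by (subst Bochner_Integration.integral_add) auto
        also have "\<dots> = (ix s * u' s) * Vv" using int_point[OF iv s] by simp
        finally show "integral\<^sup>L M01 (\<lambda>r. k1 s r) + integral\<^sup>L M01 (\<lambda>r. k2 s r) = (ix s * u' s) * Vv" .
      qed
      also have "\<dots> = Uu * Vv" unfolding Uu_def by simp
      finally show ?thesis using F2(1) by simp
    qed
    have "(LINT y:{0..x}|lborel. u' y * v y + u y * v' y) = integral\<^sup>L M01 (\<lambda>y. ix y * (u' y * v y + u y * v' y))"
      using si_M01[OF x] unfolding ix_def by simp
    also have "\<dots> = integral\<^sup>L M01 (\<lambda>s. ix s * (u' s * v s)) + integral\<^sup>L M01 (\<lambda>r. ix r * (u r * v' r))"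
      using int_ind[OF i1] int_ind[OF i2] unfolding ix_def by (simp add: distrib_left)
    also have "\<dots> = v 0 * Uu + u 0 * Vv + Uu * Vv" using T1 T2 T3 F2(1) by simp
    finally show ?thesis using ux vx by (simp add: algebra_simps)
  qed
  have "integrable M01 (\<lambda>x. u' x * v x + u x * v' x)" using i1 i2 by simp
  then show ?thesis unfolding ac_def using main by blast
qed


lemma ac_pow: assumes U: "ac u u'"
  shows "ac (\<lambda>x. u x ^ Suc n) (\<lambda>x. real (Suc n) * u x ^ n * u' x)"
proof (induction n)
  case 0
  show ?case by (rule ac_cong[OF U]) auto
next
  case (Suc n)
  have "ac (\<lambda>x. u x ^ Suc n * u x) (\<lambda>x. real (Suc n) * u x ^ n * u' x * u x + u x ^ Suc n * u' x)"
    by (rule ac_mult[OF Suc U])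
  then show ?case
    by (rule ac_cong) (auto simp: algebra_simps)
qed

definition Ep :: "nat \<Rightarrow> real \<Rightarrow> real" where "Ep N a = (\<Sum>n<N. a ^ n / fact n)"

lemma Ep_lim: "(\<lambda>N. Ep N a) \<longlonglongrightarrow> exp a"
proof -
  have "(\<lambda>n. a ^ n /\<^sub>R fact n) sums exp a" by (rule exp_converges)
  then show ?thesis unfolding sums_def Ep_def by (simp add: divide_inverse_commute)
qed

lemma Ep_bound: "\<bar>Ep N a\<bar> \<le> exp \<bar>a\<bar>"
proof -
  have "\<bar>Ep N a\<bar> \<le> (\<Sum>n<N. \<bar>a\<bar> ^ n / fact n)"
    unfolding Ep_def by (rule order_trans[OF sum_abs]) (simp add: abs_mult power_abs)
  also have "\<dots> \<le> (\<Sum>n. \<bar>a\<bar> ^ n / fact n)"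
  proof (rule sum_le_suminf)
    have "(\<lambda>n. \<bar>a\<bar> ^ n /\<^sub>R fact n) sums exp \<bar>a\<bar>" by (rule exp_converges)
    then show "summable (\<lambda>n. \<bar>a\<bar> ^ n / fact n)" by (simp add: sums_iff divide_inverse_commute)
  qed auto
  also have "\<dots> = exp \<bar>a\<bar>"
  proof -
    have "(\<lambda>n. \<bar>a\<bar> ^ n /\<^sub>R fact n) sums exp \<bar>a\<bar>" by (rule exp_converges)
    then show ?thesis by (simp add: sums_iff divide_inverse_commute)
  qed
  finally show ?thesis .
qed

lemma Ep_shift_lim: fixes a :: real shows "(\<lambda>N. \<Sum>n<N. a ^ Suc n / fact (Suc n)) \<longlonglongrightarrow> exp a - 1"
proof -
  have "(\<lambda>N. Ep (Suc N) a - 1) \<longlonglongrightarrow> exp a - 1"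
    by (intro tendsto_diff Ep_lim[THEN LIMSEQ_Suc] tendsto_const)
  moreover have "Ep (Suc N) a - 1 = (\<Sum>n<N. a ^ Suc n / fact (Suc n))" for N
    unfolding Ep_def by (subst sum.lessThan_Suc_shift) simp
  ultimately show ?thesis by simp
qed

lemma ac_exp: assumes U: "ac u u'"
  shows "ac (\<lambda>x. exp (u x)) (\<lambda>x. exp (u x) * u' x)"
proof -
  have iu: "integrable M01 u'" using U by (simp add: ac_def)
  have [measurable]: "u' \<in> borel_measurable M01" using iu by auto
  have cu: "continuous_on {0..1} u" by (rule ac_cont[OF U])
  have [measurable]: "u \<in> borel_measurable M01" by (rule cont_meas_M01[OF cu])
  obtain M where M: "\<forall>x\<in>{0..1}. \<bar>u x\<bar> \<le> M" using cont_bounded01[OF cu] by blast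
  have ie: "integrable M01 (\<lambda>x. exp (u x) * u' x)"
    by (intro cont_int_mult iu continuous_intros cu)
  have main: "exp (u x) = exp (u 0) + (LINT y:{0..x}|lborel. exp (u y) * u' y)" if x: "x \<in> {0..1}" for x
  proof -
    define ix where "ix y = (indicator {0..x} y :: real)" for y
    define S where "S N y = ix y * (Ep N (u y) * u' y)" for N y
    have SI: "integral\<^sup>L M01 (\<lambda>y. ix y * (u y ^ n * u' y)) = (u x ^ Suc n - u 0 ^ Suc n) / real (Suc n)" for n
    proof -
      have "(LINT y:{0..x}|lborel. real (Suc n) * u y ^ n * u' y) = u x ^ Suc n - u 0 ^ Suc n"
        using ac_ftc[OF ac_pow[OF U, of n], of 0 x] x by simp
      moreover have "(LINT y:{0..x}|lborel. real (Suc n) * u y ^ n * u' y) = real (Suc n) * integral\<^sup>L M01 (\<lambda>y. ix y * (u y ^ n * u' y))"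
      proof -
        have "(LINT y:{0..x}|lborel. real (Suc n) * u y ^ n * u' y) = integral\<^sup>L M01 (\<lambda>y. ix y * (real (Suc n) * u y ^ n * u' y))"
          using si_M01[OF x, of "\<lambda>y. real (Suc n) * u y ^ n * u' y"] unfolding ix_def .
        also have "\<dots> = integral\<^sup>L M01 (\<lambda>y. real (Suc n) * (ix y * (u y ^ n * u' y)))"
          by (rule Bochner_Integration.integral_cong) (simp_all only: mult_ac)
        also have "\<dots> = real (Suc n) * integral\<^sup>L M01 (\<lambda>y. ix y * (u y ^ n * u' y))"
          by (rule integral_mult_right_zero)
        finally show ?thesis .
      qed
      ultimately show ?thesis by (simp add: field_simps)
    qed
    have ipow: "integrable M01 (\<lambda>y. ix y * (u y ^ n * u' y))" for n
      unfolding ix_def by (intro int_ind cont_int_mult iu continuous_intros cu)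
    have IS: "integral\<^sup>L M01 (S N) = (\<Sum>n<N. (u x ^ Suc n - u 0 ^ Suc n) / fact (Suc n))" for N
    proof -
      have "S N = (\<lambda>y. \<Sum>n<N. ix y * (u y ^ n * u' y) / fact n)"
        unfolding S_def Ep_def by (intro ext) (simp add: sum_distrib_left sum_distrib_right mult_ac)
      then have "integral\<^sup>L M01 (S N) = (\<Sum>n<N. integral\<^sup>L M01 (\<lambda>y. ix y * (u y ^ n * u' y) / fact n))"
        using ipow by (simp add: Bochner_Integration.integral_sum)
      also have "\<dots> = (\<Sum>n<N. (u x ^ Suc n - u 0 ^ Suc n) / fact (Suc n))"
      proof (intro sum.cong refl)
        fix n
        have "integral\<^sup>L M01 (\<lambda>y. ix y * (u y ^ n * u' y) / fact n) = integral\<^sup>L M01 (\<lambda>y. ix y * (u y ^ n * u' y)) / fact n"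
          by (rule integral_divide_zero)
        also have "\<dots> = ((u x ^ Suc n - u 0 ^ Suc n) / real (Suc n)) / fact n" unfolding SI ..
        also have "\<dots> = (u x ^ Suc n - u 0 ^ Suc n) / fact (Suc n)"
          by (simp add: fact_Suc divide_divide_eq_left mult.commute)
        finally show "integral\<^sup>L M01 (\<lambda>y. ix y * (u y ^ n * u' y) / fact n) = (u x ^ Suc n - u 0 ^ Suc n) / fact (Suc n)" .
      qed
      finally show ?thesis .
    qed
    have lim1: "(\<lambda>N. integral\<^sup>L M01 (S N)) \<longlonglongrightarrow> integral\<^sup>L M01 (\<lambda>y. ix y * (exp (u y) * u' y))"
    proof (rule integral_dominated_convergence[where w="\<lambda>y. exp M * \<bar>u' y\<bar>"])
      show "(\<lambda>y. ix y * (exp (u y) * u' y)) \<in> borel_measurable M01" unfolding ix_def by measurable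
      show "\<And>N. S N \<in> borel_measurable M01" unfolding S_def ix_def Ep_def by measurable
      show "integrable M01 (\<lambda>y. exp M * \<bar>u' y\<bar>)" using iu by simp
      show "AE y in M01. (\<lambda>N. S N y) \<longlonglongrightarrow> ix y * (exp (u y) * u' y)"
        unfolding S_def by (rule AE_I2) (intro tendsto_intros Ep_lim)
      show "\<And>N. AE y in M01. norm (S N y) \<le> exp M * \<bar>u' y\<bar>"
      proof (rule AE_I2)
        fix N y assume "y \<in> space M01"
        then have y: "\<bar>u y\<bar> \<le> M" using M by auto
        have "exp \<bar>u y\<bar> \<le> exp M" using y by simp
        then have "\<bar>Ep N (u y)\<bar> \<le> exp M" using Ep_bound[of N "u y"] by linarith
        then have "\<bar>Ep N (u y)\<bar> * \<bar>u' y\<bar> \<le> exp M * \<bar>u' y\<bar>" by (intro mult_right_mono) auto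
        have "\<bar>ix y\<bar> \<le> 1" unfolding ix_def by (auto simp: indicator_def)
        have "norm (S N y) = \<bar>ix y\<bar> * (\<bar>Ep N (u y)\<bar> * \<bar>u' y\<bar>)" by (simp add: S_def abs_mult)
        also have "\<dots> \<le> 1 * (exp M * \<bar>u' y\<bar>)"
          by (rule mult_mono) (use \<open>\<bar>ix y\<bar> \<le> 1\<close> \<open>\<bar>Ep N (u y)\<bar> * \<bar>u' y\<bar> \<le> exp M * \<bar>u' y\<bar>\<close> in auto)
        finally show "norm (S N y) \<le> exp M * \<bar>u' y\<bar>" by simp
      qed
    qed
    have lim2: "(\<lambda>N. integral\<^sup>L M01 (S N)) \<longlonglongrightarrow> (exp (u x) - 1) - (exp (u 0) - 1)"
      unfolding IS diff_divide_distrib sum_subtractf by (intro tendsto_diff Ep_shift_lim)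
    have "integral\<^sup>L M01 (\<lambda>y. ix y * (exp (u y) * u' y)) = exp (u x) - exp (u 0)"
      using LIMSEQ_unique[OF lim1 lim2] by simp
    moreover have "(LINT y:{0..x}|lborel. exp (u y) * u' y) = integral\<^sup>L M01 (\<lambda>y. ix y * (exp (u y) * u' y))"
      using si_M01[OF x] unfolding ix_def .
    ultimately show ?thesis by simp
  qed
  show ?thesis unfolding ac_def
  proof (intro conjI ballI)
    show "integrable M01 (\<lambda>x. exp (u x) * u' x)" by (rule ie)
    fix x :: real assume x: "x \<in> {0..1}"
    show "exp (u x) = exp (u 0) + (LINT y:{0..x}|lborel. exp (u y) * u' y)" by (rule main[OF x])
  qed
qed


lemma ac_cosh_sinh:
  assumes U: "ac u u'"
  shows "ac (\<lambda>x. cosh (u x)) (\<lambda>x. sinh (u x) * u' x)" "ac (\<lambda>x. sinh (u x)) (\<lambda>x. cosh (u x) * u' x)"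
proof -
  have e1: "ac (\<lambda>x. exp (u x)) (\<lambda>x. exp (u x) * u' x)" by (rule ac_exp[OF U])
  have e2: "ac (\<lambda>x. exp (- u x)) (\<lambda>x. exp (- u x) * (- u' x))"
    by (rule ac_cong[OF ac_exp[OF ac_cmult[OF U, of "-1"]]]) auto
  show "ac (\<lambda>x. cosh (u x)) (\<lambda>x. sinh (u x) * u' x)"
    by (rule ac_cong[OF ac_cmult[OF ac_add[OF e1 e2], of "1/2"]]) (auto simp: cosh_field_def sinh_field_def field_simps)
  show "ac (\<lambda>x. sinh (u x)) (\<lambda>x. cosh (u x) * u' x)"
    by (rule ac_cong[OF ac_cmult[OF ac_diff[OF e1 e2], of "1/2"]]) (auto simp: cosh_field_def sinh_field_def field_simps)
qed

locale stat2 = stat +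
  assumes orth: "integral\<^sup>L M01 (\<lambda>x. \<rho> x * \<sigma> x) = 0"
begin

abbreviation "G \<equiv> Gop \<mu> \<rho> \<sigma>"
abbreviation "ff \<equiv> fop \<mu> \<rho> \<sigma>"
definition "PP x = (LINT y:{0..x}|lborel. (\<rho> y)^2 * (G y - \<mu>))"
definition "mm x = 2 * \<rho> x * \<sigma> x - PP x * (\<rho> x)^2"

lemma ac_th: "ac (th \<rho>) (\<lambda>y. (\<rho> y)^2)"
  by (rule ac_cong[OF ac_int[OF ir2, of 0]]) (auto simp: th_def)

lemma ac_Af: "ac (Af \<rho> \<sigma>) (\<lambda>y. 2 * \<rho> y * \<sigma> y)"
  by (rule ac_cong[OF ac_int[OF irs, of 0]]) (auto simp: Af_def)

lemma ac_G: "ac G (\<lambda>y. 2 * \<rho> y * \<sigma> y)"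
  by (rule ac_cong[OF ac_add[OF ac_Af ac_const]]) (auto simp: Gop_Af)

lemma i_r2G: "integrable M01 (\<lambda>y. (\<rho> y)^2 * (G y - \<mu>))"
proof -
  have c: "continuous_on {0..1} (\<lambda>y. G y - \<mu>)" by (intro continuous_intros G_cont)
  show ?thesis using cont_int_mult[OF c ir2] by (simp add: mult.commute)
qed

lemma ac_PP: "ac PP (\<lambda>y. (\<rho> y)^2 * (G y - \<mu>))"
  by (rule ac_cong[OF ac_int[OF i_r2G, of 0]]) (auto simp: PP_def)

lemma Af0: "Af \<rho> \<sigma> 0 = 0"
  using si_00[OF irs] by (simp add: Af_def)

lemma Af1: "Af \<rho> \<sigma> 1 = 0"
proof -
  have "Af \<rho> \<sigma> 1 = integral\<^sup>L M01 (\<lambda>y. 2 * \<rho> y * \<sigma> y)" unfolding Af_def lint_M01 ..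
  also have "\<dots> = 2 * integral\<^sup>L M01 (\<lambda>y. \<rho> y * \<sigma> y)" by (simp add: mult.assoc)
  finally show ?thesis using orth by simp
qed

lemma G10: "G 1 = G 0" unfolding Gop_Af Af0 Af1 ..

lemma int_r2G: "integral\<^sup>L M01 (\<lambda>y. (\<rho> y)^2 * G y) = \<mu>"
proof -
  define c where "c = integral\<^sup>L M01 (\<lambda>y. Af \<rho> \<sigma> y * (\<rho> y)^2)"
  have iA: "integrable M01 (\<lambda>y. Af \<rho> \<sigma> y * (\<rho> y)^2)" by (rule cont_int_mult[OF Af_cont ir2])
  have "integral\<^sup>L M01 (\<lambda>y. (\<rho> y)^2 * G y) = integral\<^sup>L M01 (\<lambda>y. Af \<rho> \<sigma> y * (\<rho> y)^2 + (\<mu> - c) * (\<rho> y)^2)"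
    unfolding Gop_Af c_def by (rule Bochner_Integration.integral_cong) (auto simp: algebra_simps)
  also have "\<dots> = c + (\<mu> - c) * integral\<^sup>L M01 (\<lambda>y. (\<rho> y)^2)"
    using iA ir2 unfolding c_def by simp
  finally show ?thesis using norm1 by simp
qed

lemma PP0: "PP 0 = 0" using si_00[OF i_r2G] by (simp add: PP_def)

lemma PP1: "PP 1 = 0"
proof -
  have "PP 1 = integral\<^sup>L M01 (\<lambda>y. (\<rho> y)^2 * G y - \<mu> * (\<rho> y)^2)"
    unfolding PP_def lint_M01 by (rule Bochner_Integration.integral_cong) (auto simp: algebra_simps)
  also have "\<dots> = integral\<^sup>L M01 (\<lambda>y. (\<rho> y)^2 * G y) - \<mu> * integral\<^sup>L M01 (\<lambda>y. (\<rho> y)^2)"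
    using ir2 cont_int_mult[OF G_cont ir2] by (simp add: mult.commute)
  finally show ?thesis using int_r2G norm1 by simp
qed

lemma PP_cont: "continuous_on {0..1} PP" by (rule ac_cont[OF ac_PP])

lemma i_mm: "integrable M01 mm"
proof -
  have "integrable M01 (\<lambda>x. PP x * (\<rho> x)^2)" by (rule cont_int_mult[OF PP_cont ir2])
  then show ?thesis unfolding mm_def[abs_def] using irs by simp
qed

definition "WW c x = cosh (th \<rho> x + c) * (G x - \<mu>) - sinh (th \<rho> x + c) * PP x"

lemma ac_WW: "ac (WW c) (\<lambda>x. cosh (th \<rho> x + c) * mm x)"
proof -
  have U: "ac (\<lambda>x. th \<rho> x + c) (\<lambda>y. (\<rho> y)^2)" by (rule ac_cong[OF ac_add[OF ac_th ac_const]]) auto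
  note cs = ac_cosh_sinh[OF U]
  have Gm: "ac (\<lambda>x. G x - \<mu>) (\<lambda>y. 2 * \<rho> y * \<sigma> y)" by (rule ac_cong[OF ac_diff[OF ac_G ac_const]]) auto
  show ?thesis
    by (rule ac_cong[OF ac_diff[OF ac_mult[OF cs(1) Gm] ac_mult[OF cs(2) ac_PP]]])
       (auto simp: WW_def mm_def algebra_simps)
qed

lemma Kf_sym: "Kf \<rho> x y = Kf \<rho> y x" unfolding Kf_def by (simp add: min.commute max.commute)

lemma Kf_cont2: "x \<in> {0..1} \<Longrightarrow> continuous_on {0..1} (\<lambda>y. Kf \<rho> x y)"
  using Kf_cont[of x] by (simp add: Kf_sym)


lemma Qg: assumes y: "y \<in> {0..1}"
  shows "integral\<^sup>L M01 (\<lambda>x. Kf \<rho> x y * mm x) = - PP y"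
proof -
  define s2 where "s2 = 2 * sinh (1/2::real)"
  have s2: "s2 \<noteq> 0" unfolding s2_def by simp
  define a where "a = 1/2 - th \<rho> y"
  define b where "b = - th \<rho> y - 1/2"
  define g where "g x = Kf \<rho> x y * mm x" for x
  have ig: "integrable M01 g" unfolding g_def by (rule cont_int_mult[OF Kf_cont[OF y] i_mm])
  have "integral\<^sup>L M01 g = integral {0..1} g" using si_hk(2)[OF ig, of 0 1] by (simp add: lint_M01)
  also have "\<dots> = integral {0..y} g + integral {y..1} g"
    using Henstock_Kurzweil_Integration.integral_combine[of 0 y 1 g] si_hk(1)[OF ig, of 0 1] y by auto
  also have "integral {0..y} g = (LINT x:{0..y}|lborel. g x)" using si_hk(2)[OF ig, of 0 y] y by auto
  also have "integral {y..1} g = (LINT x:{y..1}|lborel. g x)" using si_hk(2)[OF ig, of y 1] y by auto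
  also have "(LINT x:{0..y}|lborel. g x) = (LINT x:{0..y}|lborel. cosh (th \<rho> x + a) * mm x) / s2"
  proof -
    have "(LINT x:{0..y}|lborel. g x) = (LINT x:{0..y}|lborel. cosh (th \<rho> x + a) * mm x / s2)"
    proof (rule set_lebesgue_integral_cong[OF _ allI[OF impI]])
      show "{0..y} \<in> sets lborel" by simp
      fix x assume x: "x \<in> {0..y}"
      then have x01: "x \<in> {0..1}" using y by auto
      have "th \<rho> x \<le> th \<rho> y" using th_le(2)[of x y] x y by auto
      then have "\<bar>th \<rho> x - th \<rho> y\<bar> - 1/2 = - (th \<rho> x + a)" unfolding a_def by simp
      then have "cosh (\<bar>th \<rho> x - th \<rho> y\<bar> - 1/2) = cosh (th \<rho> x + a)" by (simp only: cosh_minus)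
      then show "g x = cosh (th \<rho> x + a) * mm x / s2"
        unfolding g_def Kf_th[OF x01 y] s2_def by simp
    qed
    then show ?thesis by simp
  qed
  also have "(LINT x:{0..y}|lborel. cosh (th \<rho> x + a) * mm x) = WW a y - WW a 0"
    using ac_ftc[OF ac_WW, of 0 y] y by auto
  also have "(LINT x:{y..1}|lborel. g x) = (LINT x:{y..1}|lborel. cosh (th \<rho> x + b) * mm x) / s2"
  proof -
    have "(LINT x:{y..1}|lborel. g x) = (LINT x:{y..1}|lborel. cosh (th \<rho> x + b) * mm x / s2)"
    proof (rule set_lebesgue_integral_cong[OF _ allI[OF impI]])
      show "{y..1} \<in> sets lborel" by simp
      fix x assume x: "x \<in> {y..1}"
      then have x01: "x \<in> {0..1}" using y by auto
      have "th \<rho> y \<le> th \<rho> x" using th_le(2)[of y x] x y by auto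
      then have "\<bar>th \<rho> x - th \<rho> y\<bar> - 1/2 = th \<rho> x + b" unfolding b_def by simp
      then show "g x = cosh (th \<rho> x + b) * mm x / s2"
        unfolding g_def Kf_th[OF x01 y] s2_def by simp
    qed
    then show ?thesis by simp
  qed
  also have "(LINT x:{y..1}|lborel. cosh (th \<rho> x + b) * mm x) = WW b 1 - WW b y"
    using ac_ftc[OF ac_WW, of y 1] y by auto
  also have "(WW a y - WW a 0) / s2 + (WW b 1 - WW b y) / s2 = - PP y"
  proof -
    have e1: "th \<rho> y + a = 1/2" and e2: "th \<rho> y + b = - (1/2)" and e3: "th \<rho> 0 + a = a" and e4: "th \<rho> 1 + b = a"
      unfolding a_def b_def th0 th1 by auto
    have w1: "WW a y = cosh (1/2) * (G y - \<mu>) - sinh (1/2) * PP y"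
      by (simp only: WW_def e1)
    have w2: "WW b y = cosh (1/2) * (G y - \<mu>) + sinh (1/2) * PP y"
      unfolding WW_def e2 by simp
    have w3: "WW a 0 = cosh a * (G 0 - \<mu>)"
      unfolding WW_def e3 PP0 by simp
    have w4: "WW b 1 = cosh a * (G 0 - \<mu>)"
      unfolding WW_def e4 PP1 G10 by simp
    have "WW a y - WW a 0 + (WW b 1 - WW b y) = - s2 * PP y"
      unfolding w1 w2 w3 w4 s2_def by (simp add: algebra_simps)
    then have "((WW a y - WW a 0) + (WW b 1 - WW b y)) / s2 = - PP y" using s2 by simp
    then show ?thesis by (simp add: add_divide_distrib)
  qed
  finally show ?thesis unfolding g_def .
qed


lemma th_meas[measurable]: "th \<rho> \<in> borel_measurable M01" by (rule cont_meas_M01[OF th_cont])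
lemma mm_meas[measurable]: "mm \<in> borel_measurable M01" using i_mm by auto
lemma hf_meas[measurable]: "hf \<mu> \<rho> \<sigma> \<in> borel_measurable M01" by (rule h_meas)

lemma K_meas: "(\<lambda>p. Kf \<rho> (fst p) (snd p) * hf \<mu> \<rho> \<sigma> (snd p) * mm (fst p)) \<in> borel_measurable (M01 \<Otimes>\<^sub>M M01)"
proof -
  have c: "(cosh :: real \<Rightarrow> real) \<in> borel_measurable borel"
    by (rule borel_measurable_continuous_onI) (intro continuous_intros)
  have "(\<lambda>p. cosh (\<bar>th \<rho> (fst p) - th \<rho> (snd p)\<bar> - 1/2)) \<in> borel_measurable (M01 \<Otimes>\<^sub>M M01)"
    by (rule measurable_compose[OF _ c]) measurable
  then have "(\<lambda>p. cosh (\<bar>th \<rho> (fst p) - th \<rho> (snd p)\<bar> - 1/2) / (2 * sinh (1/2)) * hf \<mu> \<rho> \<sigma> (snd p) * mm (fst p)) \<in> borel_measurable (M01 \<Otimes>\<^sub>M M01)"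
    by measurable
  moreover have "p \<in> space (M01 \<Otimes>\<^sub>M M01) \<Longrightarrow> cosh (\<bar>th \<rho> (fst p) - th \<rho> (snd p)\<bar> - 1/2) / (2 * sinh (1/2)) * hf \<mu> \<rho> \<sigma> (snd p) * mm (fst p)
     = Kf \<rho> (fst p) (snd p) * hf \<mu> \<rho> \<sigma> (snd p) * mm (fst p)" for p
    by (auto simp: space_pair_measure Kf_th)
  ultimately show ?thesis using measurable_cong by (metis (no_types, lifting))
qed

lemma Fub_step: "integral\<^sup>L M01 (\<lambda>x. Fop \<mu> \<rho> \<sigma> x * mm x) = - integral\<^sup>L M01 (\<lambda>y. hf \<mu> \<rho> \<sigma> y * PP y)"
proof -
  define k where "k x y = Kf \<rho> x y * hf \<mu> \<rho> \<sigma> y * mm x" for x y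
  have km: "case_prod k \<in> borel_measurable (M01 \<Otimes>\<^sub>M M01)"
    using K_meas unfolding k_def by (simp add: case_prod_beta')
  have bd: "\<bar>k x y\<bar> \<le> \<bar>mm x\<bar> * \<bar>Kmax * hf \<mu> \<rho> \<sigma> y\<bar>" if "x \<in> {0..1}" "y \<in> {0..1}" for x y
  proof -
    have "\<bar>Kf \<rho> x y\<bar> \<le> Kmax" using Kf_bound[OF that] by simp
    then have "\<bar>Kf \<rho> x y\<bar> * (\<bar>hf \<mu> \<rho> \<sigma> y\<bar> * \<bar>mm x\<bar>) \<le> Kmax * (\<bar>hf \<mu> \<rho> \<sigma> y\<bar> * \<bar>mm x\<bar>)"
      by (intro mult_right_mono) auto
    moreover have "0 \<le> Kmax" using Kf_bound[OF that] by linarith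
    ultimately show ?thesis unfolding k_def by (simp add: abs_mult mult_ac)
  qed
  have ib: "integrable M01 (\<lambda>y. Kmax * hf \<mu> \<rho> \<sigma> y)" using h_int by simp
  note F = fub[OF km i_mm ib bd]
  have "integral\<^sup>L M01 (\<lambda>x. integral\<^sup>L M01 (\<lambda>y. k x y)) = integral\<^sup>L M01 (\<lambda>x. Fop \<mu> \<rho> \<sigma> x * mm x)"
  proof (rule Bochner_Integration.integral_cong[OF refl])
    fix x
    have "(\<lambda>y. k x y) = (\<lambda>y. mm x * (Kf \<rho> x y * hf \<mu> \<rho> \<sigma> y))" unfolding k_def by (auto simp: mult_ac)
    then show "integral\<^sup>L M01 (\<lambda>y. k x y) = Fop \<mu> \<rho> \<sigma> x * mm x" by (simp add: Fop_Kf mult.commute)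
  qed
  moreover have "integral\<^sup>L M01 (\<lambda>y. integral\<^sup>L M01 (\<lambda>x. k x y)) = integral\<^sup>L M01 (\<lambda>y. hf \<mu> \<rho> \<sigma> y * (- PP y))"
  proof (rule Bochner_Integration.integral_cong[OF refl])
    fix y assume "y \<in> space M01"
    then have y: "y \<in> {0..1}" by simp
    have "(\<lambda>x. k x y) = (\<lambda>x. hf \<mu> \<rho> \<sigma> y * (Kf \<rho> x y * mm x))" unfolding k_def by (auto simp: mult_ac)
    then show "integral\<^sup>L M01 (\<lambda>x. k x y) = hf \<mu> \<rho> \<sigma> y * (- PP y)" using Qg[OF y] by simp
  qed
  ultimately show ?thesis using F(1) by simp
qed


lemma ac_total: "ac u u' \<Longrightarrow> integral\<^sup>L M01 u' = u 1 - u 0"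
  using ac_ftc[of u u' 0 1] by (simp add: lint_M01)

definition "AA1 x = (LINT y:{0..x}|lborel. 2 * (\<sigma> y * \<sigma> y + \<rho> y * ff y))"
definition "cc1 = integral\<^sup>L M01 (\<lambda>y. AA1 y * (\<rho> y * \<rho> y) + Af \<rho> \<sigma> y * (\<sigma> y * \<rho> y + \<rho> y * \<sigma> y))"
definition "GG1 x = AA1 x - cc1"

lemma iss: "integrable M01 (\<lambda>y. \<sigma> y * \<sigma> y)" by (rule L2_prod[OF Ls Ls])
lemma irf: "integrable M01 (\<lambda>y. \<rho> y * ff y)" by (rule L2_prod[OF Lr f_L2])
lemma isf: "integrable M01 (\<lambda>y. \<sigma> y * ff y)" by (rule L2_prod[OF Ls f_L2])
lemma irs1: "integrable M01 (\<lambda>y. \<rho> y * \<sigma> y)" by (rule L2_prod[OF Lr Ls])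

lemma iA1d: "integrable M01 (\<lambda>y. 2 * (\<sigma> y * \<sigma> y + \<rho> y * ff y))"
  using iss irf by simp

lemma ac_AA1: "ac AA1 (\<lambda>y. 2 * (\<sigma> y * \<sigma> y + \<rho> y * ff y))"
  by (rule ac_cong[OF ac_int[OF iA1d, of 0]]) (auto simp: AA1_def)

lemma AA1_cont: "continuous_on {0..1} AA1" by (rule ac_cont[OF ac_AA1])

lemma Z1: "integral\<^sup>L M01 (\<lambda>x. \<rho> x * \<sigma> x * (G x)^2) = 0"
proof -
  have "ac (\<lambda>x. G x * (G x * G x)) (\<lambda>x. 2 * \<rho> x * \<sigma> x * (G x * G x) + G x * (2 * \<rho> x * \<sigma> x * G x + G x * (2 * \<rho> x * \<sigma> x)))"
    by (rule ac_mult[OF ac_G ac_mult[OF ac_G ac_G]])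
  then have "ac (\<lambda>x. G x * (G x * G x)) (\<lambda>x. 6 * (\<rho> x * \<sigma> x * (G x)^2))"
    by (rule ac_cong) (auto simp: power2_eq_square algebra_simps)
  from ac_total[OF this] have "6 * integral\<^sup>L M01 (\<lambda>x. \<rho> x * \<sigma> x * (G x)^2) = 0"
    using G10 by simp
  then show ?thesis by simp
qed

lemma Z2: "integral\<^sup>L M01 (\<lambda>x. Af \<rho> \<sigma> x * (\<rho> x * \<sigma> x)) = 0"
proof -
  have "ac (\<lambda>x. Af \<rho> \<sigma> x * Af \<rho> \<sigma> x) (\<lambda>x. 2 * \<rho> x * \<sigma> x * Af \<rho> \<sigma> x + Af \<rho> \<sigma> x * (2 * \<rho> x * \<sigma> x))"
    by (rule ac_mult[OF ac_Af ac_Af])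
  then have "ac (\<lambda>x. Af \<rho> \<sigma> x * Af \<rho> \<sigma> x) (\<lambda>x. 4 * (Af \<rho> \<sigma> x * (\<rho> x * \<sigma> x)))"
    by (rule ac_cong) (auto simp: algebra_simps)
  from ac_total[OF this] have "4 * integral\<^sup>L M01 (\<lambda>x. Af \<rho> \<sigma> x * (\<rho> x * \<sigma> x)) = 0"
    using Af0 Af1 by simp
  then show ?thesis by simp
qed

lemma Z4: "integral\<^sup>L M01 (\<lambda>x. (\<rho> x)^2 * (G x - \<mu>) * AA1 x + PP x * (2 * (\<sigma> x * \<sigma> x + \<rho> x * ff x))) = 0"
proof -
  have "ac (\<lambda>x. PP x * AA1 x) (\<lambda>x. (\<rho> x)^2 * (G x - \<mu>) * AA1 x + PP x * (2 * (\<sigma> x * \<sigma> x + \<rho> x * ff x)))"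
    by (rule ac_mult[OF ac_PP ac_AA1])
  from ac_total[OF this] show ?thesis using PP0 PP1 by simp
qed

lemma main_identity:
  "integral\<^sup>L M01 (\<lambda>x. (\<sigma> x * \<rho> x + \<rho> x * \<sigma> x) * (G x * G x)
     + \<rho> x * \<rho> x * (GG1 x * G x + G x * GG1 x) + 4 * (ff x * \<sigma> x + \<sigma> x * ff x)) = 0"
proof -
  define F where "F = Fop \<mu> \<rho> \<sigma>"
  have Fc: "continuous_on {0..1} F" unfolding F_def by (rule F_cont)
  have c1: "cc1 = integral\<^sup>L M01 (\<lambda>y. AA1 y * (\<rho> y)^2)"
  proof -
    have i1: "integrable M01 (\<lambda>y. AA1 y * (\<rho> y * \<rho> y))" using cont_int_mult[OF AA1_cont ir2] by (simp add: power2_eq_square)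
    have i2: "integrable M01 (\<lambda>y. Af \<rho> \<sigma> y * (\<rho> y * \<sigma> y))" by (rule cont_int_mult[OF Af_cont irs1])
    have "cc1 = integral\<^sup>L M01 (\<lambda>y. AA1 y * (\<rho> y * \<rho> y) + 2 * (Af \<rho> \<sigma> y * (\<rho> y * \<sigma> y)))"
      unfolding cc1_def by (rule Bochner_Integration.integral_cong) (auto simp: algebra_simps)
    also have "\<dots> = integral\<^sup>L M01 (\<lambda>y. AA1 y * (\<rho> y * \<rho> y)) + 2 * integral\<^sup>L M01 (\<lambda>y. Af \<rho> \<sigma> y * (\<rho> y * \<sigma> y))"
      using i1 i2 by simp
    finally show ?thesis using Z2 by (simp add: power2_eq_square)
  qed
  define z1 where "z1 x = 6 * (\<rho> x * \<sigma> x * (G x)^2)" for x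
  define z4 where "z4 x = (\<rho> x)^2 * (G x - \<mu>) * AA1 x + PP x * (2 * (\<sigma> x * \<sigma> x + \<rho> x * ff x))" for x
  define z5 where "z5 x = F x * mm x + hf \<mu> \<rho> \<sigma> x * PP x" for x
  define z6 where "z6 x = (\<rho> x)^2 * AA1 x" for x
  define z7 where "z7 x = (\<rho> x)^2 * G x" for x
  have pw: "(\<sigma> x * \<rho> x + \<rho> x * \<sigma> x) * (G x * G x)
     + \<rho> x * \<rho> x * (GG1 x * G x + G x * GG1 x) + 4 * (ff x * \<sigma> x + \<sigma> x * ff x)
     = z1 x + 2 * z4 x - 2 * z5 x + 2 * \<mu> * z6 x - 2 * cc1 * z7 x" for x
    unfolding z1_def z4_def z5_def z6_def z7_def GG1_def fop_def hf_def mm_def F_def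
    by (simp add: power2_eq_square algebra_simps)
  have cm: "integrable M01 (\<lambda>x. w x * g x)" if "continuous_on {0..1} g" "integrable M01 w" for g w :: "real \<Rightarrow> real"
    using cont_int_mult[OF that] by (simp add: mult.commute)
  have iz1: "integrable M01 z1" unfolding z1_def
    using cm[OF _ irs1, of "\<lambda>x. (G x)^2"] G_cont by (auto intro: continuous_intros)
  have iz4: "integrable M01 z4" unfolding z4_def
  proof (intro Bochner_Integration.integrable_add)
    have "continuous_on {0..1} (\<lambda>x. (G x - \<mu>) * AA1 x)" by (intro continuous_intros G_cont AA1_cont)
    from cm[OF this ir2] show "integrable M01 (\<lambda>x. (\<rho> x)\<^sup>2 * (G x - \<mu>) * AA1 x)" by (simp add: mult_ac)
    show "integrable M01 (\<lambda>x. PP x * (2 * (\<sigma> x * \<sigma> x + \<rho> x * ff x)))"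
      by (rule cont_int_mult[OF PP_cont iA1d])
  qed
  have iz5: "integrable M01 z5" unfolding z5_def
    using cont_int_mult[OF Fc i_mm] cm[OF PP_cont h_int] by simp
  have iz6: "integrable M01 z6" unfolding z6_def using cm[OF AA1_cont ir2] .
  have iz7: "integrable M01 z7" unfolding z7_def using cm[OF G_cont ir2] .
  have "integral\<^sup>L M01 (\<lambda>x. (\<sigma> x * \<rho> x + \<rho> x * \<sigma> x) * (G x * G x)
     + \<rho> x * \<rho> x * (GG1 x * G x + G x * GG1 x) + 4 * (ff x * \<sigma> x + \<sigma> x * ff x))
     = integral\<^sup>L M01 (\<lambda>x. z1 x + 2 * z4 x - 2 * z5 x + 2 * \<mu> * z6 x - 2 * cc1 * z7 x)"
    by (rule Bochner_Integration.integral_cong[OF refl pw])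
  also have "\<dots> = integral\<^sup>L M01 z1 + 2 * integral\<^sup>L M01 z4 - 2 * integral\<^sup>L M01 z5 + 2 * \<mu> * integral\<^sup>L M01 z6 - 2 * cc1 * integral\<^sup>L M01 z7"
    using iz1 iz4 iz5 iz6 iz7 by simp
  also have "integral\<^sup>L M01 z1 = 0" unfolding z1_def using Z1 by simp
  also have "integral\<^sup>L M01 z4 = 0" unfolding z4_def using Z4 .
  also have "integral\<^sup>L M01 z5 = 0"
  proof -
    have "integral\<^sup>L M01 z5 = integral\<^sup>L M01 (\<lambda>x. F x * mm x) + integral\<^sup>L M01 (\<lambda>x. hf \<mu> \<rho> \<sigma> x * PP x)"
      unfolding z5_def using cont_int_mult[OF Fc i_mm] cm[OF PP_cont h_int] by simp
    then show ?thesis using Fub_step unfolding F_def by simp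
  qed
  also have "integral\<^sup>L M01 z6 = cc1" unfolding z6_def c1 by (simp add: mult.commute)
  also have "integral\<^sup>L M01 z7 = \<mu>" unfolding z7_def by (rule int_r2G)
  finally show ?thesis by simp
qed

end


context dyn
begin

lemma orth_t:
  assumes nb: "F \<noteq> bot"
  shows "integral\<^sup>L M01 (\<lambda>x. \<rho> t x * \<sigma> t x) = 0"
proof -
  define NN where "NN s = integral\<^sup>L M01 (\<lambda>x. \<rho> s x * \<rho> s x)" for s
  have N1: "NN s = 1" if "s \<in> I" for s using norm1[OF that] unfolding NN_def by (simp add: power2_eq_square)
  have lim1: "((\<lambda>s. integral\<^sup>L M01 (Q t (\<lambda>s x. \<rho> s x * \<rho> s x) s)) \<longlongrightarrow> integral\<^sup>L M01 (\<lambda>x. \<sigma> t x * \<rho> t x + \<rho> t x * \<sigma> t x)) F"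
    by (rule l1_int[OF QR])
  have ev: "eventually (\<lambda>s. integral\<^sup>L M01 (Q t (\<lambda>s x. \<rho> s x * \<rho> s x) s) = 0) F"
    using evI
  proof (rule eventually_mono)
    fix s assume s: "s \<in> I"
    have "integral\<^sup>L M01 (Q t (\<lambda>s x. \<rho> s x * \<rho> s x) s) = integral\<^sup>L M01 (\<lambda>x. (\<rho> s x * \<rho> s x - \<rho> t x * \<rho> t x) / (s - t))"
      unfolding Q_def ..
    also have "\<dots> = (NN s - NN t) / (s - t)"
      unfolding NN_def using L2_prod[OF Lr[OF s] Lr[OF s]] L2_prod[OF Lr[OF tI] Lr[OF tI]] by simp
    also have "\<dots> = 0" using N1[OF s] N1[OF tI] by simp
    finally show "integral\<^sup>L M01 (Q t (\<lambda>s x. \<rho> s x * \<rho> s x) s) = 0" .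
  qed
  have lim0: "((\<lambda>s. integral\<^sup>L M01 (Q t (\<lambda>s x. \<rho> s x * \<rho> s x) s)) \<longlongrightarrow> 0) F"
    by (rule Lim_transform_eventually[OF tendsto_const]) (rule eventually_mono[OF ev], simp)
  have "integral\<^sup>L M01 (\<lambda>x. \<sigma> t x * \<rho> t x + \<rho> t x * \<sigma> t x) = 0"
    using tendsto_unique[OF nb lim1 lim0] .
  moreover have "integral\<^sup>L M01 (\<lambda>x. \<sigma> t x * \<rho> t x + \<rho> t x * \<sigma> t x) = 2 * integral\<^sup>L M01 (\<lambda>x. \<rho> t x * \<sigma> t x)"
  proof -
    have "integral\<^sup>L M01 (\<lambda>x. \<sigma> t x * \<rho> t x + \<rho> t x * \<sigma> t x) = integral\<^sup>L M01 (\<lambda>x. 2 * (\<rho> t x * \<sigma> t x))"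
      by (rule Bochner_Integration.integral_cong) auto
    then show ?thesis by simp
  qed
  ultimately show ?thesis by simp
qed

lemma DD0: assumes nb: "F \<noteq> bot" shows "DD = 0"
proof -
  interpret S: stat2 "\<rho> t" "\<sigma> t" \<mu>
    by unfold_locales (rule orth_t[OF nb])
  show ?thesis
    using S.main_identity
    unfolding DD_def G1_def A1_def c1_def AA_def GG_def S.GG1_def S.AA1_def S.cc1_def .
qed

lemma final: "(EE has_real_derivative 0) F"
proof (cases "F = bot")
  case True
  then show ?thesis unfolding has_field_derivative_iff by simp
next
  case False
  then show ?thesis using E_deriv DD0 by simp
qed

end

theorem proposition6:
  fixes \<mu> :: real and I :: "real set" and \<rho> \<rho>\<^sub>t :: "real \<Rightarrow> real \<Rightarrow> real"
  assumes "is_interval I"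
    and "\<And>t. t \<in> I \<Longrightarrow> sqint01 (\<rho> t) \<and> sqint01 (\<rho>\<^sub>t t)"
    and "\<And>t. t \<in> I \<Longrightarrow> has_L2_derivative \<rho> (\<rho>\<^sub>t t) t I"
    and "\<And>t. t \<in> I \<Longrightarrow> has_L2_derivative \<rho>\<^sub>t (fop \<mu> (\<rho> t) (\<rho>\<^sub>t t)) t I"
    and "\<And>t. t \<in> I \<Longrightarrow> (LINT x:{0..1}|lborel. (\<rho> t x)^2) = 1"
    and "t \<in> I"
  shows "((\<lambda>s. LINT x:{0..1}|lborel.
             (\<rho> s x)^2 * (Gop \<mu> (\<rho> s) (\<rho>\<^sub>t s) x)^2 + 4 * (\<rho>\<^sub>t s x)^2)
          has_real_derivative 0) (at t within I)"
proof -
  interpret D: dyn \<mu> I \<rho> \<rho>\<^sub>t t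
    using assms by unfold_locales auto
  have "(\<lambda>s. LINT x:{0..1}|lborel. (\<rho> s x)^2 * (Gop \<mu> (\<rho> s) (\<rho>\<^sub>t s) x)^2 + 4 * (\<rho>\<^sub>t s x)^2) = D.EE"
    by (intro ext) (simp add: D.EE_def D.GG_def lint_M01)
  then show ?thesis using D.final by simp
qed


end
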